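(* Let $d\geq 2$ be a fixed odd integer, $c_0\geq 1$ a constant, $C_1=2^{10d}c_0$, $m=m(n)$, $p_1=(\log (mn))^{1/d}/(m^{(d-1)/(2d)}n^{(d-1)/(2d)})$ with $p_1 n\geq p_1 m\geq (\log n)^4$. Then with probability at least $1-n^{-\Omega(1)}$, in $G(m,n,C_1p_1)$ with parts $U,V$, every two distinct vertices of $U$ are connected by at least $2^{10d}c_0\log n$ internally vertex-disjoint paths of length exactly $d+1$.
   Context: $G(m,n,p)$ is the random bipartite graph with parts $U,V$, $|U|=m$, $|V|=n$, each edge between $U$ and $V$ present independently with probability $p$. $\log$ is the logarithm to base $2$; asymptotic notation is as $n\to\infty$. *)

theory Defs
  imports Complex_Main
begin

text \<open>Random bipartite graph G(m,n,p): parts U = {0..<m} (vertices Inl i) and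
  V = {0..<n} (vertices Inr j); the edge set is a subset E of U x V, each pair
  present independently with probability p.\<close>

definition bip_prob :: "nat \<Rightarrow> nat \<Rightarrow> real \<Rightarrow> ((nat \<times> nat) set \<Rightarrow> bool) \<Rightarrow> real" where
  "bip_prob m n p Q =
     (\<Sum>E\<in>Pow ({..<m} \<times> {..<n}).
        if Q E then p ^ card E * (1 - p) ^ (m * n - card E) else 0)"

definition bip_adj :: "(nat \<times> nat) set \<Rightarrow> nat + nat \<Rightarrow> nat + nat \<Rightarrow> bool" where
  "bip_adj E x y \<longleftrightarrow>
     (\<exists>i j. (i, j) \<in> E \<and> ((x = Inl i \<and> y = Inr j) \<or> (x = Inr j \<and> y = Inl i)))"

definition is_path :: "(nat \<times> nat) set \<Rightarrow> nat \<Rightarrow> nat + nat \<Rightarrow> nat + nat \<Rightarrow> (nat + nat) list \<Rightarrow> bool" where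
  "is_path E k x y P \<longleftrightarrow>
     length P = k + 1 \<and> distinct P \<and> hd P = x \<and> last P = y \<and>
     (\<forall>i < k. bip_adj E (P ! i) (P ! Suc i))"

definition internal_vertices :: "'v list \<Rightarrow> 'v set" where
  "internal_vertices P = set (tl (butlast P))"

definition many_disjoint_paths :: "(nat \<times> nat) set \<Rightarrow> nat \<Rightarrow> real \<Rightarrow> nat + nat \<Rightarrow> nat + nat \<Rightarrow> bool" where
  "many_disjoint_paths E k r x y \<longleftrightarrow>
     (\<exists>\<P>. finite \<P> \<and> real (card \<P>) \<ge> r \<and> (\<forall>P\<in>\<P>. is_path E k x y P) \<and>
          (\<forall>P\<in>\<P>. \<forall>Q\<in>\<P>. P \<noteq> Q \<longrightarrow> internal_vertices P \<inter> internal_vertices Q = {}))"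

end

theory Submission
  imports Defs
begin

definition wt :: "'a set \<Rightarrow> real \<Rightarrow> 'a set \<Rightarrow> real" where
  "wt X p E = p ^ card E * (1 - p) ^ (card X - card E)"

definition Pr :: "'a set \<Rightarrow> real \<Rightarrow> ('a set \<Rightarrow> bool) \<Rightarrow> real" where
  "Pr X p Q = (\<Sum>E\<in>Pow X. if Q E then wt X p E else 0)"

lemma bip_prob_Pr: "bip_prob m n p Q = Pr ({..<m} \<times> {..<n}) p Q"
proof -
  have c: "card ({..<m} \<times> {..<n}) = m * n" by (simp add: card_cartesian_product)
  show ?thesis unfolding bip_prob_def Pr_def wt_def c ..
qed

lemma pow_split_sum:
  assumes "finite A" "finite B" "A \<inter> B = {}"
  shows "(\<Sum>E\<in>Pow (A \<union> B). f E) = (\<Sum>E1\<in>Pow A. \<Sum>E2\<in>Pow B. f (E1 \<union> E2))"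
proof -
  have img: "Pow (A \<union> B) = (\<lambda>(E1,E2). E1 \<union> E2) ` (Pow A \<times> Pow B)"
  proof (intro equalityI subsetI)
    fix E assume "E \<in> Pow (A \<union> B)"
    then have "E = (E \<inter> A) \<union> (E \<inter> B)" "(E \<inter> A, E \<inter> B) \<in> Pow A \<times> Pow B" by auto
    then show "E \<in> (\<lambda>(E1,E2). E1 \<union> E2) ` (Pow A \<times> Pow B)"
      by (metis (no_types, lifting) case_prod_conv image_eqI)
  qed auto
  have inj: "inj_on (\<lambda>(E1,E2). E1 \<union> E2) (Pow A \<times> Pow B)"
  proof (rule inj_onI, clarify)
    fix E1 E2 F1 F2 assume "E1 \<subseteq> A" "E2 \<subseteq> B" "F1 \<subseteq> A" "F2 \<subseteq> B" "E1 \<union> E2 = F1 \<union> F2"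
    then show "E1 = F1 \<and> E2 = F2" using assms(3) by blast
  qed
  show ?thesis
    unfolding img sum.reindex[OF inj] comp_def by (subst sum.cartesian_product) (simp add: split_def)
qed

lemma wt_union:
  assumes "finite A" "finite B" "A \<inter> B = {}" "E1 \<subseteq> A" "E2 \<subseteq> B"
  shows "wt (A \<union> B) p (E1 \<union> E2) = wt A p E1 * wt B p E2"
proof -
  have f: "finite E1" "finite E2" using assms by (auto intro: finite_subset)
  have d: "E1 \<inter> E2 = {}" using assms by blast
  have c1: "card (E1 \<union> E2) = card E1 + card E2" using card_Un_disjoint[OF f d] .
  have c2: "card (A \<union> B) = card A + card B" using card_Un_disjoint[OF assms(1-3)] .
  have "card E1 \<le> card A" "card E2 \<le> card B" using assms by (auto intro!: card_mono)
  then have "card (A \<union> B) - card (E1 \<union> E2) = (card A - card E1) + (card B - card E2)"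
    using c1 c2 by simp
  then show ?thesis unfolding wt_def c1 by (simp add: power_add algebra_simps)
qed

lemma Pr_split:
  assumes "finite X" "D \<subseteq> X"
  shows "Pr X p Q = (\<Sum>E1\<in>Pow (X - D). wt (X - D) p E1 * Pr D p (\<lambda>E2. Q (E1 \<union> E2)))"
proof -
  have X: "(X - D) \<union> D = X" using assms by blast
  have fD: "finite D" "finite (X - D)" using assms by (auto intro: finite_subset)
  have "Pr X p Q = (\<Sum>E\<in>Pow ((X - D) \<union> D). if Q E then wt ((X - D) \<union> D) p E else 0)"
    unfolding Pr_def X ..
  also have "\<dots> = (\<Sum>E1\<in>Pow (X - D). \<Sum>E2\<in>Pow D. if Q (E1 \<union> E2) then wt ((X - D) \<union> D) p (E1 \<union> E2) else 0)"
    by (rule pow_split_sum) (use fD in auto)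
  also have "\<dots> = (\<Sum>E1\<in>Pow (X - D). \<Sum>E2\<in>Pow D. wt (X - D) p E1 * (if Q (E1 \<union> E2) then wt D p E2 else 0))"
    apply (intro sum.cong refl) apply (subst wt_union) using fD by auto
  also have "\<dots> = (\<Sum>E1\<in>Pow (X - D). wt (X - D) p E1 * Pr D p (\<lambda>E2. Q (E1 \<union> E2)))"
    unfolding Pr_def by (simp add: sum_distrib_left)
  finally show ?thesis .
qed

lemma Pr_total:
  assumes "finite X"
  shows "Pr X p (\<lambda>_. True) = 1"
  using assms
proof (induction X rule: finite_induct)
  case empty
  then show ?case by (simp add: Pr_def wt_def)
next
  case (insert x X)
  have "Pr (insert x X) p (\<lambda>_. True) = (\<Sum>E1\<in>Pow (insert x X - {x}). wt (insert x X - {x}) p E1 * Pr {x} p (\<lambda>_. True))"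
    using Pr_split[of "insert x X" "{x}" p "\<lambda>_. True"] insert by simp
  also have "Pr {x} p (\<lambda>_. True) = 1"
  proof -
    have "Pow {x} = {{}, {x}}" by auto
    then show ?thesis by (simp add: Pr_def wt_def)
  qed
  also have "insert x X - {x} = X" using insert by auto
  finally show ?case using insert unfolding Pr_def by simp
qed

lemma wt_nonneg: "0 \<le> p \<Longrightarrow> p \<le> 1 \<Longrightarrow> 0 \<le> wt X p E"
  unfolding wt_def by simp

lemma Pr_nonneg: "0 \<le> p \<Longrightarrow> p \<le> 1 \<Longrightarrow> 0 \<le> Pr X p Q"
  unfolding Pr_def by (intro sum_nonneg) (auto simp: wt_nonneg)

lemma Pr_mono:
  assumes "0 \<le> p" "p \<le> 1" "\<And>E. E \<subseteq> X \<Longrightarrow> Q E \<Longrightarrow> R E"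
  shows "Pr X p Q \<le> Pr X p R"
  unfolding Pr_def by (intro sum_mono) (use assms in \<open>auto simp: wt_nonneg\<close>)

lemma Pr_compl:
  assumes "finite X"
  shows "Pr X p Q = 1 - Pr X p (\<lambda>E. \<not> Q E)"
proof -
  have "Pr X p Q + Pr X p (\<lambda>E. \<not> Q E) = Pr X p (\<lambda>_. True)"
    unfolding Pr_def by (simp add: sum.distrib[symmetric] if_distrib) (intro sum.cong, auto)
  then show ?thesis using Pr_total[OF assms] by simp
qed

lemma Pr_union:
  assumes "0 \<le> p" "p \<le> 1" "finite I"
  shows "Pr X p (\<lambda>E. \<exists>i\<in>I. Q i E) \<le> (\<Sum>i\<in>I. Pr X p (Q i))"
  using assms(3)
proof (induction I rule: finite_induct)
  case empty
  then show ?case by (simp add: Pr_def)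
next
  case (insert i I)
  have "Pr X p (\<lambda>E. \<exists>j\<in>insert i I. Q j E) \<le> Pr X p (Q i) + Pr X p (\<lambda>E. \<exists>j\<in>I. Q j E)"
    unfolding Pr_def by (simp add: sum.distrib[symmetric]) (intro sum_mono, auto simp: wt_nonneg assms)
  then show ?case using insert by simp
qed

lemma Pr_or:
  assumes "0 \<le> p" "p \<le> 1"
  shows "Pr X p (\<lambda>E. Q E \<or> R E) \<le> Pr X p Q + Pr X p R"
  unfolding Pr_def by (simp add: sum.distrib[symmetric]) (intro sum_mono, auto simp: wt_nonneg assms)

lemma Pr_empty_inter:
  assumes "finite X" "F \<subseteq> X"
  shows "Pr X p (\<lambda>E. E \<inter> F = {}) = (1 - p) ^ card F"
proof -
  have fF: "finite F" using assms by (auto intro: finite_subset)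
  have inner: "Pr F p (\<lambda>E2. (E1 \<union> E2) \<inter> F = {}) = (1 - p) ^ card F" if "E1 \<subseteq> X - F" for E1
  proof -
    have "Pr F p (\<lambda>E2. (E1 \<union> E2) \<inter> F = {}) = (\<Sum>E\<in>Pow F. if E = {} then wt F p E else 0)"
      unfolding Pr_def using that by (intro sum.cong) auto
    also have "\<dots> = wt F p {}" by (subst sum.delta) (auto simp: fF)
    finally show ?thesis by (simp add: wt_def)
  qed
  have "Pr X p (\<lambda>E. E \<inter> F = {}) = (\<Sum>E1\<in>Pow (X - F). wt (X - F) p E1 * (1 - p) ^ card F)"
    by (subst Pr_split[OF assms]) (intro sum.cong; simp add: inner)
  also have "\<dots> = Pr (X - F) p (\<lambda>_. True) * (1 - p) ^ card F"
    unfolding Pr_def by (simp add: sum_distrib_right)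
  finally show ?thesis using Pr_total[of "X - F" p] assms by simp
qed

lemma Pr_cond:
  assumes "finite X" "D \<subseteq> X" "0 \<le> p" "p \<le> 1"
    and "\<And>E1. E1 \<subseteq> X - D \<Longrightarrow> c E1 \<Longrightarrow> f E1 \<subseteq> D \<and> K \<le> card (f E1)"
  shows "Pr X p (\<lambda>E. c (E - D) \<and> E \<inter> f (E - D) = {}) \<le> (1 - p) ^ K"
proof -
  have fD: "finite D" using assms by (auto intro: finite_subset)
  have inner: "Pr D p (\<lambda>E2. c ((E1 \<union> E2) - D) \<and> (E1 \<union> E2) \<inter> f ((E1 \<union> E2) - D) = {}) \<le> (1 - p) ^ K"
    if E1: "E1 \<subseteq> X - D" for E1
  proof -
    have eq: "(E1 \<union> E2) - D = E1" if "E2 \<subseteq> D" for E2 using that E1 by blast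
    show ?thesis
    proof (cases "c E1")
      case True
      then have fs: "f E1 \<subseteq> D" "K \<le> card (f E1)" using assms(5)[OF E1] by auto
      have "Pr D p (\<lambda>E2. c ((E1 \<union> E2) - D) \<and> (E1 \<union> E2) \<inter> f ((E1 \<union> E2) - D) = {})
          = Pr D p (\<lambda>E2. E2 \<inter> f E1 = {})"
        unfolding Pr_def using True fs E1 by (intro sum.cong refl) (auto simp: eq)
      also have "\<dots> = (1 - p) ^ card (f E1)" by (rule Pr_empty_inter[OF fD fs(1)])
      also have "\<dots> \<le> (1 - p) ^ K" using fs assms by (intro power_decreasing) auto
      finally show ?thesis .
    next
      case False
      have "Pr D p (\<lambda>E2. c ((E1 \<union> E2) - D) \<and> (E1 \<union> E2) \<inter> f ((E1 \<union> E2) - D) = {}) = 0"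
        unfolding Pr_def using False by (intro sum.neutral) (auto simp: eq)
      then show ?thesis using assms by simp
    qed
  qed
  have "Pr X p (\<lambda>E. c (E - D) \<and> E \<inter> f (E - D) = {})
      \<le> (\<Sum>E1\<in>Pow (X - D). wt (X - D) p E1 * (1 - p) ^ K)"
    by (subst Pr_split[OF assms(1,2)]) (intro sum_mono mult_left_mono inner; auto simp: wt_nonneg assms)
  also have "\<dots> = Pr (X - D) p (\<lambda>_. True) * (1 - p) ^ K"
    unfolding Pr_def by (simp add: sum_distrib_right)
  finally show ?thesis using Pr_total[of "X - D" p] assms by simp
qed

definition nb :: "(nat \<Rightarrow> nat \<Rightarrow> nat \<times> nat) \<Rightarrow> (nat \<times> nat) set \<Rightarrow> nat set \<Rightarrow> nat set \<Rightarrow> nat set" where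
  "nb pr E a Q = {y\<in>Q. \<exists>x\<in>a. pr x y \<in> E}"

lemma choose_le_pow': "n choose r \<le> n ^ r"
  by (cases "r \<le> n") (auto simp: binomial_le_pow binomial_eq_0)

lemma card_subsets_k:
  assumes "finite A"
  shows "card {B. B \<subseteq> A \<and> card B = k} = card A choose k"
  using n_subsets[OF assms] .

lemma Exp_bound:
  fixes pr :: "nat \<Rightarrow> nat \<Rightarrow> nat \<times> nat"
  assumes X: "finite X" and P: "finite P" and Q: "finite Q"
    and inX: "\<And>x y. x \<in> P \<Longrightarrow> y \<in> Q \<Longrightarrow> pr x y \<in> X"
    and inj: "\<And>x y x' y'. pr x y = pr x' y' \<Longrightarrow> x = x' \<and> y = y'"
    and t': "t' \<le> card Q" and p: "0 \<le> p" "p \<le> 1"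
  shows "Pr X p (\<lambda>E. \<exists>a. a \<subseteq> P \<and> card a = t \<and> card (nb pr E a Q) < t')
     \<le> real (card P) ^ t * real (card Q) ^ t' * (1 - p) ^ (t * (card Q - t'))"
proof -
  define I where "I = {a. a \<subseteq> P \<and> card a = t} \<times> {F. F \<subseteq> Q \<and> card F = card Q - t'}"
  define ev where "ev = (\<lambda>aF E. E \<inter> (\<lambda>(x,y). pr x y) ` (fst aF \<times> snd aF) = {})"
  have finI: "finite I" unfolding I_def using P Q by auto
  have sub: "Pr X p (\<lambda>E. \<exists>a. a \<subseteq> P \<and> card a = t \<and> card (nb pr E a Q) < t')
      \<le> Pr X p (\<lambda>E. \<exists>aF\<in>I. ev aF E)"
  proof (rule Pr_mono[OF p])
    fix E assume "\<exists>a. a \<subseteq> P \<and> card a = t \<and> card (nb pr E a Q) < t'"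
    then obtain a where a: "a \<subseteq> P" "card a = t" "card (nb pr E a Q) < t'" by blast
    have nbQ: "nb pr E a Q \<subseteq> Q" unfolding nb_def by auto
    have fnb: "finite (nb pr E a Q)" using finite_subset[OF nbQ Q] .
    have "card (Q - nb pr E a Q) = card Q - card (nb pr E a Q)"
      using card_Diff_subset[OF fnb nbQ] .
    then have "card Q - t' \<le> card (Q - nb pr E a Q)" using a(3) by simp
    then obtain F where F: "F \<subseteq> Q - nb pr E a Q" "card F = card Q - t'"
      using obtain_subset_with_card_n by metis
    have "(a, F) \<in> I" unfolding I_def using a F by auto
    moreover have "ev (a, F) E"
      using F(1) unfolding ev_def nb_def by fastforce
    ultimately show "\<exists>aF\<in>I. ev aF E" by blast
  qed
  also have "\<dots> \<le> (\<Sum>aF\<in>I. Pr X p (ev aF))" by (rule Pr_union[OF p finI])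
  also have "\<dots> = (\<Sum>aF\<in>I. (1 - p) ^ (t * (card Q - t')))"
  proof (rule sum.cong[OF refl])
    fix aF assume "aF \<in> I"
    then obtain a F where aF: "aF = (a, F)" "a \<subseteq> P" "card a = t" "F \<subseteq> Q" "card F = card Q - t'"
      unfolding I_def by auto
    have sX: "(\<lambda>(x,y). pr x y) ` (a \<times> F) \<subseteq> X" using aF by (force intro!: inX)
    have injo: "inj_on (\<lambda>(x,y). pr x y) (a \<times> F)"
      by (rule inj_onI) (auto dest: inj)
    have "card ((\<lambda>(x,y). pr x y) ` (a \<times> F)) = t * (card Q - t')"
      using card_image[OF injo] aF by (simp add: card_cartesian_product)
    then show "Pr X p (ev aF) = (1 - p) ^ (t * (card Q - t'))"
      unfolding ev_def using Pr_empty_inter[OF X sX] aF by simp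
  qed
  also have "\<dots> = real (card I) * (1 - p) ^ (t * (card Q - t'))" by simp
  also have "\<dots> \<le> real (card P) ^ t * real (card Q) ^ t' * (1 - p) ^ (t * (card Q - t'))"
  proof (rule mult_right_mono)
    have "card I = (card P choose t) * (card Q choose (card Q - t'))"
      unfolding I_def using P Q by (simp add: card_cartesian_product n_subsets)
    also have "card Q choose (card Q - t') = card Q choose t'"
      using t' by (simp add: binomial_symmetric[symmetric])
    finally have "card I \<le> card P ^ t * card Q ^ t'"
      using mult_le_mono[OF choose_le_pow' choose_le_pow'] by metis
    then show "real (card I) \<le> real (card P) ^ t * real (card Q) ^ t'"
      by (metis of_nat_le_iff of_nat_mult of_nat_power)
  qed (use p in simp)
  finally show ?thesis .
qed

definition pool :: "nat \<Rightarrow> nat \<Rightarrow> nat set" where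
  "pool N i = {i * N..<Suc i * N}"

definition fl :: "nat \<Rightarrow> nat \<Rightarrow> nat \<times> nat" where "fl x y = (y, x)"

primrec Rl :: "(nat \<times> nat) set \<Rightarrow> nat \<Rightarrow> nat \<Rightarrow> nat \<Rightarrow> nat set \<Rightarrow> nat set \<Rightarrow> nat \<Rightarrow> nat set" where
  "Rl E NU NV u SU SV 0 = nb Pair E {u} (pool NV 0) - SV"
| "Rl E NU NV u SU SV (Suc j) =
     (if even j then nb fl E (Rl E NU NV u SU SV j) (pool NU (j div 2)) - SU
      else nb Pair E (Rl E NU NV u SU SV j) (pool NV (Suc j div 2)) - SV)"

definition vtx :: "nat \<Rightarrow> nat \<Rightarrow> nat + nat" where
  "vtx j x = (if even j then Inr x else Inl x)"

definition lay :: "nat \<Rightarrow> nat \<Rightarrow> nat \<Rightarrow> (nat + nat) set" where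
  "lay NU NV j = (if even j then Inr ` pool NV (j div 2) else Inl ` pool NU (j div 2))"

lemma pool_disj: "a \<noteq> b \<Longrightarrow> pool N a \<inter> pool N b = {}"
proof (rule ccontr)
  assume "a \<noteq> b" "pool N a \<inter> pool N b \<noteq> {}"
  then obtain x where "x \<in> pool N a" "x \<in> pool N b" by blast
  then have x: "a * N \<le> x" "x < Suc a * N" "b * N \<le> x" "x < Suc b * N"
    unfolding pool_def by auto
  show False
  proof (cases "a < b")
    case True
    then have "Suc a * N \<le> b * N" by (intro mult_le_mono1) simp
    then show False using x by linarith
  next
    case False
    then have "Suc b * N \<le> a * N" using \<open>a \<noteq> b\<close> by (intro mult_le_mono1) simp
    then show False using x by linarith
  qed
qed

lemma lay_disj:
  assumes "i \<noteq> i'"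
  shows "lay NU NV i \<inter> lay NU NV i' = {}"
proof -
  have "i div 2 \<noteq> i' div 2" if "even i = even i'"
    using that assms by (metis div_mult_mod_eq even_iff_mod_2_eq_zero odd_iff_mod_2_eq_one)
  then show ?thesis
    unfolding lay_def using pool_disj by (auto simp: image_iff) 
qed

lemma Rl_sub: "Rl E NU NV u SU SV j \<subseteq> (if even j then pool NV (j div 2) - SV else pool NU (j div 2) - SU)"
  by (cases j) (auto simp: nb_def)

lemma successively_nth:
  "successively P xs \<Longrightarrow> Suc i < length xs \<Longrightarrow> P (xs ! i) (xs ! Suc i)"
proof (induction P xs arbitrary: i rule: successively.induct)
  case (3 P x y xs)
  then show ?case by (cases i) auto
qed auto

lemma reach_path:
  "x \<in> Rl E NU NV u SU SV j \<Longrightarrow>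
   \<exists>Ls. length Ls = Suc j \<and> last Ls = vtx j x \<and>
     (\<forall>i<Suc j. Ls ! i \<in> lay NU NV i \<and> Ls ! i \<notin> Inl ` SU \<union> Inr ` SV) \<and>
     successively (bip_adj E) (Inl u # Ls)"
proof (induction j arbitrary: x)
  case 0
  then have "x \<in> pool NV 0" "x \<notin> SV" "(u, x) \<in> E" by (auto simp: nb_def)
  then show ?case
    by (intro exI[of _ "[Inr x]"]) (auto simp: vtx_def lay_def bip_adj_def)
next
  case (Suc j)
  show ?case
  proof (cases "even j")
    case True
    with Suc.prems obtain y where y: "y \<in> Rl E NU NV u SU SV j" "(x, y) \<in> E"
      and x: "x \<in> pool NU (j div 2)" "x \<notin> SU"
      by (auto simp: nb_def fl_def)
    from Suc.IH[OF y(1)] obtain Ls where Ls: "length Ls = Suc j" "last Ls = vtx j y"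
      "\<forall>i<Suc j. Ls ! i \<in> lay NU NV i \<and> Ls ! i \<notin> Inl ` SU \<union> Inr ` SV"
      "successively (bip_adj E) (Inl u # Ls)" by blast
    have ne: "Ls \<noteq> []" using Ls(1) by auto
    have lastL: "last (Inl u # Ls) = Inr y" using Ls(2) True ne by (simp add: vtx_def)
    have "successively (bip_adj E) ((Inl u # Ls) @ [Inl x])"
      using Ls(4) lastL y(2) by (subst successively_append_iff) (auto simp: bip_adj_def)
    moreover have "\<forall>i<Suc (Suc j). (Ls @ [Inl x]) ! i \<in> lay NU NV i \<and> (Ls @ [Inl x]) ! i \<notin> Inl ` SU \<union> Inr ` SV"
    proof (intro allI impI)
      fix i assume "i < Suc (Suc j)"
      then consider "i < Suc j" | "i = Suc j" by linarith
      then show "(Ls @ [Inl x]) ! i \<in> lay NU NV i \<and> (Ls @ [Inl x]) ! i \<notin> Inl ` SU \<union> Inr ` SV"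
      proof cases
        case 1 then show ?thesis using Ls(1,3) by (simp add: nth_append)
      next
        case 2
        have "Suc j div 2 = j div 2" using True by presburger
        then show ?thesis using 2 Ls(1) x True by (auto simp: nth_append lay_def)
      qed
    qed
    ultimately show ?thesis using Ls(1) True
      by (intro exI[of _ "Ls @ [Inl x]"]) (auto simp: vtx_def)
  next
    case False
    with Suc.prems obtain y where y: "y \<in> Rl E NU NV u SU SV j" "(y, x) \<in> E"
      and x: "x \<in> pool NV (Suc j div 2)" "x \<notin> SV"
      by (auto simp: nb_def)
    from Suc.IH[OF y(1)] obtain Ls where Ls: "length Ls = Suc j" "last Ls = vtx j y"
      "\<forall>i<Suc j. Ls ! i \<in> lay NU NV i \<and> Ls ! i \<notin> Inl ` SU \<union> Inr ` SV"
      "successively (bip_adj E) (Inl u # Ls)" by blast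
    have ne: "Ls \<noteq> []" using Ls(1) by auto
    have lastL: "last (Inl u # Ls) = Inl y" using Ls(2) False ne by (simp add: vtx_def)
    have "successively (bip_adj E) ((Inl u # Ls) @ [Inr x])"
      using Ls(4) lastL y(2) by (subst successively_append_iff) (auto simp: bip_adj_def)
    moreover have "\<forall>i<Suc (Suc j). (Ls @ [Inr x]) ! i \<in> lay NU NV i \<and> (Ls @ [Inr x]) ! i \<notin> Inl ` SU \<union> Inr ` SV"
    proof (intro allI impI)
      fix i assume "i < Suc (Suc j)"
      then consider "i < Suc j" | "i = Suc j" by linarith
      then show "(Ls @ [Inr x]) ! i \<in> lay NU NV i \<and> (Ls @ [Inr x]) ! i \<notin> Inl ` SU \<union> Inr ` SV"
      proof cases
        case 1 then show ?thesis using Ls(1,3) by (simp add: nth_append)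
      next
        case 2
        then show ?thesis using 2 Ls(1) x False by (auto simp: nth_append lay_def)
      qed
    qed
    ultimately show ?thesis using Ls(1) False
      by (intro exI[of _ "Ls @ [Inr x]"]) (auto simp: vtx_def)
  qed
qed

lemma final_path:
  assumes k: "1 \<le> k" and w: "w \<in> Rl E NU NV u SU SV (2 * k - 1)"
    and v: "v \<in> pool NV k" "v \<notin> SV" and e: "(w, v) \<in> E" "(u', v) \<in> E"
    and uu: "u \<in> SU" "u' \<in> SU" "u \<noteq> u'"
  shows "\<exists>P. is_path E (2 * k + 2) (Inl u) (Inl u') P \<and>
    internal_vertices P \<inter> (Inl ` SU \<union> Inr ` SV) = {}"
proof -
  have odd: "odd (2 * k - 1)" using k by presburger
  have sk: "Suc (2 * k - 1) = 2 * k" using k by simp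
  obtain Ls where Ls: "length Ls = 2 * k" "last Ls = Inl w"
      "\<forall>i<2 * k. Ls ! i \<in> lay NU NV i \<and> Ls ! i \<notin> Inl ` SU \<union> Inr ` SV"
      "successively (bip_adj E) (Inl u # Ls)"
    using reach_path[OF w] odd sk by (auto simp: vtx_def)
  define P where "P = Inl u # Ls @ [Inr v, Inl u']"
  have ne: "Ls \<noteq> []" using Ls(1) k by auto
  have dL: "distinct Ls"
    unfolding distinct_conv_nth
  proof (intro allI impI)
    fix i j assume "i < length Ls" "j < length Ls" "i \<noteq> j"
    then show "Ls ! i \<noteq> Ls ! j" using Ls(1,3) lay_disj[of i j NU NV] by auto
  qed
  have notS: "z \<notin> Inl ` SU \<union> Inr ` SV" if "z \<in> set Ls" for z
    using that Ls(1,3) by (auto simp: in_set_conv_nth)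
  have vnot: "Inr v \<notin> set Ls"
  proof
    assume "Inr v \<in> set Ls"
    then obtain i where i: "i < 2 * k" "Ls ! i = Inr v" using Ls(1) by (auto simp: in_set_conv_nth)
    then have "Inr v \<in> lay NU NV i" using Ls(3) by metis
    then have ev: "even i" "v \<in> pool NV (i div 2)" unfolding lay_def by (auto split: if_splits)
    have "i div 2 \<noteq> k" using i(1) by linarith
    then show False using pool_disj[of "i div 2" k NV] ev v(1) by auto
  qed
  have "distinct P" unfolding P_def using dL vnot notS uu by auto
  moreover have "length P = 2 * k + 2 + 1" unfolding P_def using Ls(1) by simp
  moreover have "hd P = Inl u" "last P = Inl u'" unfolding P_def by auto
  moreover have "successively (bip_adj E) P"
  proof -
    have "last (Inl u # Ls) = Inl w" using Ls(2) ne by simp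
    then have "successively (bip_adj E) ((Inl u # Ls) @ [Inr v, Inl u'])"
      using Ls(4) e by (subst successively_append_iff) (auto simp: bip_adj_def)
    then show ?thesis unfolding P_def by simp
  qed
  then have "\<forall>i < 2 * k + 2. bip_adj E (P ! i) (P ! Suc i)"
    using successively_nth \<open>length P = 2 * k + 2 + 1\<close> by fastforce
  moreover have "internal_vertices P = set Ls \<union> {Inr v}"
    unfolding P_def internal_vertices_def by (simp add: butlast_append)
  moreover have "(set Ls \<union> {Inr v}) \<inter> (Inl ` SU \<union> Inr ` SV) = {}"
    using notS v(2) by blast
  ultimately show ?thesis
    by (intro exI[of _ P]) (auto simp: is_path_def)
qed

lemma card_internal:
  assumes "is_path E k x y P"
  shows "card (internal_vertices P) \<le> k - 1"
proof -
  have "card (internal_vertices P) \<le> length (tl (butlast P))"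
    unfolding internal_vertices_def by (rule card_length)
  then show ?thesis using assms by (simp add: is_path_def)
qed

lemma internal_ne:
  assumes "is_path E k x y P" "2 \<le> k"
  shows "internal_vertices P \<noteq> {}"
proof -
  have "length (tl (butlast P)) = k - 1" using assms by (simp add: is_path_def)
  then have "1 \<le> length (tl (butlast P))" using assms(2) by linarith
  then have "0 < length (tl (butlast P))" by linarith
  then have "tl (butlast P) \<noteq> []" using length_greater_0_conv by blast
  then show ?thesis unfolding internal_vertices_def by simp
qed

lemma family:
  assumes h: "\<And>S. finite S \<Longrightarrow> card S \<le> d * j0 \<Longrightarrow>
      \<exists>P. is_path E (d + 1) x y P \<and> internal_vertices P \<inter> S = {}"
    and d: "1 \<le> d" and j: "j \<le> Suc j0"
  shows "\<exists>\<P>. finite \<P> \<and> card \<P> = j \<and> (\<forall>P\<in>\<P>. is_path E (d + 1) x y P) \<and>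
          (\<forall>P\<in>\<P>. \<forall>Q\<in>\<P>. P \<noteq> Q \<longrightarrow> internal_vertices P \<inter> internal_vertices Q = {})"
  using j
proof (induction j)
  case 0
  then show ?case by (intro exI[of _ "{}"]) auto
next
  case (Suc j)
  then obtain \<P> where F: "finite \<P>" "card \<P> = j" "\<forall>P\<in>\<P>. is_path E (d + 1) x y P"
    "\<forall>P\<in>\<P>. \<forall>Q\<in>\<P>. P \<noteq> Q \<longrightarrow> internal_vertices P \<inter> internal_vertices Q = {}" by auto
  define S where "S = \<Union> (internal_vertices ` \<P>)"
  have fS: "finite S" unfolding S_def internal_vertices_def using F(1) by auto
  have "card S \<le> (\<Sum>P\<in>\<P>. card (internal_vertices P))" unfolding S_def by (rule card_UN_le[OF F(1)])
  also have "\<dots> \<le> (\<Sum>P\<in>\<P>. d)" using F(3) card_internal by (intro sum_mono) fastforce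
  also have "\<dots> = d * j" using F(2) by simp
  also have "\<dots> \<le> d * j0" using Suc.prems by simp
  finally obtain P where P: "is_path E (d + 1) x y P" "internal_vertices P \<inter> S = {}" using h[OF fS] by blast
  have "P \<notin> \<P>"
  proof
    assume "P \<in> \<P>"
    then have "internal_vertices P \<subseteq> S" unfolding S_def by auto
    then show False using P internal_ne[OF P(1)] d by auto
  qed
  show ?case
  proof (intro exI[of _ "insert P \<P>"] conjI)
    show "card (insert P \<P>) = Suc j" using F \<open>P \<notin> \<P>\<close> by simp
    show "\<forall>Q\<in>insert P \<P>. \<forall>R\<in>insert P \<P>. Q \<noteq> R \<longrightarrow> internal_vertices Q \<inter> internal_vertices R = {}"
      using F(4) P(2) unfolding S_def by blast
  qed (use F P in auto)
qed

definition src :: "nat \<Rightarrow> nat \<Rightarrow> nat \<Rightarrow> nat set" where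
  "src NU NV j = (if even j then pool NV (j div 2) else pool NU (j div 2))"
definition tgt :: "nat \<Rightarrow> nat \<Rightarrow> nat \<Rightarrow> nat set" where
  "tgt NU NV j = (if even j then pool NU (j div 2) else pool NV (Suc j div 2))"
definition prj :: "nat \<Rightarrow> nat \<Rightarrow> nat \<Rightarrow> nat \<times> nat" where
  "prj j = (if even j then fl else Pair)"

definition ExpOK :: "(nat \<times> nat) set \<Rightarrow> nat \<Rightarrow> nat \<Rightarrow> nat \<Rightarrow> nat \<Rightarrow> nat \<Rightarrow> bool" where
  "ExpOK E NU NV j t t' = (\<forall>a. a \<subseteq> src NU NV j \<and> card a = t \<longrightarrow> t' \<le> card (nb (prj j) E a (tgt NU NV j)))"

definition DegOK :: "(nat \<times> nat) set \<Rightarrow> nat \<Rightarrow> nat set \<Rightarrow> nat \<Rightarrow> bool" where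
  "DegOK E m Q t' = (\<forall>a. a \<subseteq> {..<m} \<and> card a = 1 \<longrightarrow> t' \<le> card (nb Pair E a Q))"

lemma Rl_Suc_eq: "Rl E NU NV u SU SV (Suc j) = nb (prj j) E (Rl E NU NV u SU SV j) (tgt NU NV j) - (if even j then SU else SV)"
  by (simp add: prj_def tgt_def)

lemma card_diff_ge: "finite B \<Longrightarrow> card A - card B \<le> card (A - B)"
  using diff_card_le_card_Diff by blast

lemma nb_mono: "a \<subseteq> b \<Longrightarrow> nb pr E a Q \<subseteq> nb pr E b Q"
  unfolding nb_def by blast

lemma nb_sub: "nb pr E a Q \<subseteq> Q" unfolding nb_def by blast

lemma finite_pool[simp]: "finite (pool N i)" unfolding pool_def by simp

lemma sizes:
  assumes deg: "DegOK E m (pool NV 0) tau0" and u: "u < m"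
    and ex: "\<forall>j<J. ExpOK E NU NV j (sig j) (tau (Suc j))"
    and fS: "finite SU" "finite SV" "card SU \<le> s'" "card SV \<le> s'"
    and s0: "sig 0 + s' \<le> tau0" and sS: "\<forall>j. sig (Suc j) + s' \<le> tau (Suc j)"
  shows "j \<le> J \<Longrightarrow> sig j \<le> card (Rl E NU NV u SU SV j)"
proof (induction j)
  case 0
  have "tau0 \<le> card (nb Pair E {u} (pool NV 0))" using deg u unfolding DegOK_def by auto
  moreover have "card (nb Pair E {u} (pool NV 0)) - card SV \<le> card (nb Pair E {u} (pool NV 0) - SV)"
    by (rule card_diff_ge[OF fS(2)])
  ultimately show ?case using s0 fS by simp
next
  case (Suc j)
  then have j: "j < J" "sig j \<le> card (Rl E NU NV u SU SV j)" by auto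
  obtain a where a: "a \<subseteq> Rl E NU NV u SU SV j" "card a = sig j"
    using obtain_subset_with_card_n[OF j(2)] by metis
  have "a \<subseteq> src NU NV j" using a(1) Rl_sub[of E NU NV u SU SV j] unfolding src_def by auto
  then have t: "tau (Suc j) \<le> card (nb (prj j) E a (tgt NU NV j))"
    using ex j(1) a(2) unfolding ExpOK_def by auto
  define Sx where "Sx = (if even j then SU else SV)"
  have fSx: "finite Sx" "card Sx \<le> s'" unfolding Sx_def using fS by auto
  have sub: "nb (prj j) E a (tgt NU NV j) - Sx \<subseteq> Rl E NU NV u SU SV (Suc j)"
    unfolding Rl_Suc_eq Sx_def using nb_mono[OF a(1)] by blast
  have fin: "finite (Rl E NU NV u SU SV (Suc j))"
    using Rl_sub[of E NU NV u SU SV "Suc j"] by (auto intro: finite_subset split: if_splits)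
  have "card (nb (prj j) E a (tgt NU NV j)) - card Sx \<le> card (nb (prj j) E a (tgt NU NV j) - Sx)"
    by (rule card_diff_ge[OF fSx(1)])
  also have "\<dots> \<le> card (Rl E NU NV u SU SV (Suc j))" by (rule card_mono[OF fin sub])
  finally show ?case using t fSx sS[rule_format, of j] by linarith
qed

lemma nb_minus:
  assumes "\<And>x y. x \<in> a \<Longrightarrow> y \<in> Q \<Longrightarrow> pr x y \<notin> D"
  shows "nb pr (E - D) a Q = nb pr E a Q"
  using assms unfolding nb_def by blast

lemma Rl_minus:
  assumes "D \<subseteq> UNIV \<times> pool NV k" "j \<le> 2 * k - 1" "1 \<le> k"
  shows "Rl (E - D) NU NV u SU SV j = Rl E NU NV u SU SV j"
  using assms(2)
proof (induction j)
  case 0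
  have "pool NV 0 \<inter> pool NV k = {}" using assms(3) pool_disj by simp
  then have "nb Pair (E - D) {u} (pool NV 0) = nb Pair E {u} (pool NV 0)"
    using assms(1) by (intro nb_minus) auto
  then show ?case by simp
next
  case (Suc j)
  then have IH: "Rl (E - D) NU NV u SU SV j = Rl E NU NV u SU SV j" by simp
  show ?case
  proof (cases "even j")
    case True
    have "j div 2 \<noteq> k" using Suc.prems by linarith
    then have disj: "pool NV (j div 2) \<inter> pool NV k = {}" using pool_disj by simp
    have "nb fl (E - D) (Rl E NU NV u SU SV j) (pool NU (j div 2)) = nb fl E (Rl E NU NV u SU SV j) (pool NU (j div 2))"
    proof (rule nb_minus)
      fix x y assume "x \<in> Rl E NU NV u SU SV j" "y \<in> pool NU (j div 2)"
      then have "x \<in> pool NV (j div 2)" using Rl_sub[of E NU NV u SU SV j] True by auto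
      then show "fl x y \<notin> D" using assms(1) disj by (auto simp: fl_def)
    qed
    then show ?thesis using IH True by simp
  next
    case False
    have "Suc j div 2 \<noteq> k" using Suc.prems False by presburger
    then have disj: "pool NV (Suc j div 2) \<inter> pool NV k = {}" using pool_disj by simp
    have "nb Pair (E - D) (Rl E NU NV u SU SV j) (pool NV (Suc j div 2)) = nb Pair E (Rl E NU NV u SU SV j) (pool NV (Suc j div 2))"
      using assms(1) disj by (intro nb_minus) auto
    then show ?thesis using IH False by simp
  qed
qed

lemma path_range:
  assumes "is_path E k x y P" "1 \<le> k" "E \<subseteq> {..<m} \<times> {..<n'}" "z \<in> set P"
  shows "(\<exists>i. z = Inl i \<and> i < m) \<or> (\<exists>j. z = Inr j \<and> j < n')"
proof -
  obtain i where i: "i < length P" "z = P ! i" using assms(4) by (auto simp: in_set_conv_nth)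
  have len: "length P = k + 1" using assms(1) by (simp add: is_path_def)
  have adj: "\<forall>i<k. bip_adj E (P ! i) (P ! Suc i)" using assms(1) by (simp add: is_path_def)
  have "\<exists>w. bip_adj E z w \<or> bip_adj E w z"
  proof (cases "i < k")
    case True then show ?thesis using adj i by blast
  next
    case False
    then have "i = Suc (k - 1)" "k - 1 < k" using i len assms(2) by auto
    then show ?thesis using adj i by metis
  qed
  then show ?thesis using assms(3) unfolding bip_adj_def by blast
qed

definition Ap :: "(nat \<times> nat) set \<Rightarrow> nat \<Rightarrow> nat \<Rightarrow> nat \<Rightarrow> nat set \<Rightarrow> nat set" where
  "Ap E NV k u' SV = nb Pair E {u'} (pool NV k) - SV"

definition Jset :: "nat \<Rightarrow> nat \<Rightarrow> nat \<Rightarrow> (nat \<times> nat \<times> nat set \<times> nat set) set" where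
  "Jset m n s = {(u, u', SU, SV). u < m \<and> u' < m \<and> SU \<subseteq> {..<m} \<and> card SU \<le> s + 2 \<and> SV \<subseteq> {..<n} \<and> card SV \<le> s}"

definition Fail :: "nat \<Rightarrow> nat \<Rightarrow> nat \<Rightarrow> (nat \<Rightarrow> nat) \<Rightarrow> nat \<times> nat \<times> nat set \<times> nat set \<Rightarrow> (nat \<times> nat) set \<Rightarrow> bool" where
  "Fail NU NV k sig \<iota> E = (case \<iota> of (u, u', SU, SV) \<Rightarrow>
     let D = (pool NU (k - 1) - SU) \<times> pool NV k;
         c = (\<lambda>E1. sig (2 * k - 1) \<le> card (Rl E1 NU NV u SU SV (2 * k - 1)) \<and> sig 0 \<le> card (Ap E1 NV k u' SV));
         f = (\<lambda>E1. Rl E1 NU NV u SU SV (2 * k - 1) \<times> Ap E1 NV k u' SV)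
     in c (E - D) \<and> E \<inter> f (E - D) = {})"

lemma finite_Jset: "finite (Jset m n s)"
proof -
  have "Jset m n s \<subseteq> {..<m} \<times> {..<m} \<times> Pow {..<m} \<times> Pow {..<n}"
    unfolding Jset_def by auto
  then show ?thesis by (rule finite_subset) auto
qed

lemma Fail_bound:
  assumes "\<iota> \<in> Jset m n s" "1 \<le> k" "NU * k \<le> m" "NV * (k + 1) \<le> n" "0 \<le> p" "p \<le> 1"
  shows "Pr ({..<m} \<times> {..<n}) p (Fail NU NV k sig \<iota>) \<le> (1 - p) ^ (sig (2 * k - 1) * sig 0)"
proof -
  obtain u u' SU SV where i: "\<iota> = (u, u', SU, SV)" by (cases \<iota>) auto
  define D where "D = (pool NU (k - 1) - SU) \<times> pool NV k"
  define c where "c = (\<lambda>E1. sig (2 * k - 1) \<le> card (Rl E1 NU NV u SU SV (2 * k - 1)) \<and> sig 0 \<le> card (Ap E1 NV k u' SV))"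
  define f where "f = (\<lambda>E1. Rl E1 NU NV u SU SV (2 * k - 1) \<times> Ap E1 NV k u' SV)"
  have F: "Fail NU NV k sig \<iota> = (\<lambda>E. c (E - D) \<and> E \<inter> f (E - D) = {})"
    unfolding Fail_def i D_def c_def f_def by (simp add: Let_def)
  have pU: "pool NU (k - 1) \<subseteq> {..<m}"
  proof
    fix x assume "x \<in> pool NU (k - 1)"
    then have "x < Suc (k - 1) * NU" by (simp add: pool_def)
    also have "Suc (k - 1) * NU = NU * k" using assms(2) by simp
    finally show "x \<in> {..<m}" using assms(3) by simp
  qed
  have pV: "pool NV k \<subseteq> {..<n}"
  proof
    fix x assume "x \<in> pool NV k"
    then have "x < Suc k * NV" by (simp add: pool_def)
    also have "Suc k * NV = NV * (k + 1)" by simp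
    finally show "x \<in> {..<n}" using assms(4) by simp
  qed
  have DX: "D \<subseteq> {..<m} \<times> {..<n}" unfolding D_def using pU pV by auto
  have odd: "odd (2 * k - 1)" "(2 * k - 1) div 2 = k - 1" using assms(2) by presburger+
  have "Pr ({..<m} \<times> {..<n}) p (\<lambda>E. c (E - D) \<and> E \<inter> f (E - D) = {}) \<le> (1 - p) ^ (sig (2 * k - 1) * sig 0)"
  proof (rule Pr_cond[OF _ DX assms(5,6)])
    fix E1 assume "E1 \<subseteq> {..<m} \<times> {..<n} - D" "c E1"
    have s1: "Rl E1 NU NV u SU SV (2 * k - 1) \<subseteq> pool NU (k - 1) - SU"
      using Rl_sub[of E1 NU NV u SU SV "2 * k - 1"] odd by simp
    have s2: "Ap E1 NV k u' SV \<subseteq> pool NV k" unfolding Ap_def using nb_sub by blast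
    have fin: "finite (Rl E1 NU NV u SU SV (2 * k - 1))" "finite (Ap E1 NV k u' SV)"
      using s1 s2 by (auto intro: finite_subset)
    have "sig (2 * k - 1) * sig 0 \<le> card (f E1)"
      unfolding f_def card_cartesian_product using \<open>c E1\<close> unfolding c_def by (intro mult_le_mono) auto
    moreover have "f E1 \<subseteq> D" unfolding f_def D_def using s1 s2 by auto
    ultimately show "f E1 \<subseteq> D \<and> sig (2 * k - 1) * sig 0 \<le> card (f E1)" by simp
  qed simp
  then show ?thesis unfolding F .
qed

lemma internal_sub: "internal_vertices P \<subseteq> set P"
proof -
  have "set (tl xs) \<subseteq> set xs" for xs :: "'a list" by (cases xs) auto
  moreover have "set (butlast P) \<subseteq> set P" by (auto dest: in_set_butlastD)
  ultimately show ?thesis unfolding internal_vertices_def by blast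
qed

lemma det_main:
  assumes k: "1 \<le> k" and EX: "E \<subseteq> {..<m} \<times> {..<n}"
    and d0: "DegOK E m (pool NV 0) tau0" and dk: "DegOK E m (pool NV k) tau0"
    and ex: "\<forall>j<2 * k - 1. ExpOK E NU NV j (sig j) (tau (Suc j))"
    and nf: "\<forall>\<iota>\<in>Jset m n s. \<not> Fail NU NV k sig \<iota> E"
    and s: "s = (2 * k + 1) * j0" and r: "r \<le> real (Suc j0)"
    and s0: "sig 0 + (s + 2) \<le> tau0" and sS: "\<forall>j. sig (Suc j) + (s + 2) \<le> tau (Suc j)"
    and uu: "u < m" "u' < m" "u \<noteq> u'"
  shows "many_disjoint_paths E (2 * k + 2) r (Inl u) (Inl u')"
proof -
  have h: "\<exists>P. is_path E (2 * k + 1 + 1) (Inl u) (Inl u') P \<and> internal_vertices P \<inter> S = {}"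
    if fS: "finite S" and cS: "card S \<le> (2 * k + 1) * j0" for S
  proof -
    define A where "A = {i. i < m \<and> Inl i \<in> S}"
    define SU where "SU = A \<union> {u, u'}"
    define SV where "SV = {j. j < n \<and> Inr j \<in> S}"
    have cA: "card A \<le> card S"
    proof -
      have "card (Inl ` A :: (nat + nat) set) = card A" by (rule card_image) (simp add: inj_on_def)
      moreover have "Inl ` A \<subseteq> S" unfolding A_def by auto
      ultimately show ?thesis using card_mono[OF fS] by metis
    qed
    have cV: "card SV \<le> card S"
    proof -
      have "card (Inr ` SV :: (nat + nat) set) = card SV" by (rule card_image) (simp add: inj_on_def)
      moreover have "Inr ` SV \<subseteq> S" unfolding SV_def by auto
      ultimately show ?thesis using card_mono[OF fS] by metis
    qed
    have fin: "finite SU" "finite SV" unfolding SU_def A_def SV_def by auto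
    have cU: "card SU \<le> s + 2"
    proof -
      have "card SU \<le> card A + card {u, u'}" unfolding SU_def by (rule card_Un_le)
      also have "card {u, u'} \<le> 2" by (simp add: card_insert_if)
      finally show ?thesis using cA cS s by linarith
    qed
    have cV': "card SV \<le> s" using cV cS s by linarith
    have uSU: "u \<in> SU" "u' \<in> SU" unfolding SU_def by auto
    have J: "(u, u', SU, SV) \<in> Jset m n s"
      unfolding Jset_def using uu cU cV' by (auto simp: SU_def A_def SV_def)
    define D where "D = (pool NU (k - 1) - SU) \<times> pool NV k"
    have sz: "sig (2 * k - 1) \<le> card (Rl E NU NV u SU SV (2 * k - 1))"
      by (rule sizes[OF d0 uu(1) ex fin _ _ s0 sS]) (use cU cV' in auto)
    have "tau0 \<le> card (nb Pair E {u'} (pool NV k))" using dk uu unfolding DegOK_def by auto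
    moreover have "card (nb Pair E {u'} (pool NV k)) - card SV \<le> card (Ap E NV k u' SV)"
      unfolding Ap_def by (rule card_diff_ge[OF fin(2)])
    ultimately have szA: "sig 0 \<le> card (Ap E NV k u' SV)" using s0 cV' by linarith
    have R: "Rl (E - D) NU NV u SU SV (2 * k - 1) = Rl E NU NV u SU SV (2 * k - 1)"
      by (rule Rl_minus) (use k in \<open>auto simp: D_def\<close>)
    have Ap: "Ap (E - D) NV k u' SV = Ap E NV k u' SV"
      unfolding Ap_def using uSU by (subst nb_minus) (auto simp: D_def)
    have "\<not> Fail NU NV k sig (u, u', SU, SV) E" using nf J by blast
    then have "E \<inter> (Rl E NU NV u SU SV (2 * k - 1) \<times> Ap E NV k u' SV) \<noteq> {}"
      using sz szA R Ap unfolding Fail_def Let_def D_def by simp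
    then obtain w v where wv: "(w, v) \<in> E" "w \<in> Rl E NU NV u SU SV (2 * k - 1)" "v \<in> Ap E NV k u' SV"
      by blast
    then have v: "v \<in> pool NV k" "v \<notin> SV" "(u', v) \<in> E" unfolding Ap_def nb_def by auto
    obtain P where P: "is_path E (2 * k + 2) (Inl u) (Inl u') P"
      "internal_vertices P \<inter> (Inl ` SU \<union> Inr ` SV) = {}"
      using final_path[OF k wv(2) v(1,2) wv(1) v(3) uSU uu(3)] by blast
    have "internal_vertices P \<inter> S = {}"
    proof (rule ccontr)
      assume "internal_vertices P \<inter> S \<noteq> {}"
      then obtain z where z: "z \<in> internal_vertices P" "z \<in> S" by blast
      then have "z \<in> set P" using internal_sub[of P] by blast
      then have "(\<exists>i. z = Inl i \<and> i < m) \<or> (\<exists>j. z = Inr j \<and> j < n)"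
        using path_range[OF P(1) _ EX] by simp
      then have "z \<in> Inl ` SU \<union> Inr ` SV" using z(2) unfolding SU_def A_def SV_def by auto
      then show False using P(2) z(1) by blast
    qed
    then show ?thesis using P(1) by (intro exI[of _ P]) (simp add: add.commute)
  qed
  obtain \<P> where F: "finite \<P>" "card \<P> = Suc j0" "\<forall>P\<in>\<P>. is_path E (2 * k + 1 + 1) (Inl u) (Inl u') P"
    "\<forall>P\<in>\<P>. \<forall>Q\<in>\<P>. P \<noteq> Q \<longrightarrow> internal_vertices P \<inter> internal_vertices Q = {}"
    using family[of "2 * k + 1" j0 E "Inl u" "Inl u'" "Suc j0", OF h] by auto
  then show ?thesis unfolding many_disjoint_paths_def using r
    by (intro exI[of _ \<P>]) (auto simp: add.commute)
qed

lemma graph_main: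
  assumes k: "1 \<le> k" and NU: "NU * k \<le> m" and NV: "NV * (k + 1) \<le> n" and p: "0 \<le> p" "p \<le> 1"
    and s: "s = (2 * k + 1) * j0" and r: "r \<le> real (Suc j0)"
    and s0: "sig 0 + (s + 2) \<le> tau0" and sS: "\<forall>j. sig (Suc j) + (s + 2) \<le> tau (Suc j)"
  shows "Pr ({..<m} \<times> {..<n}) p (\<lambda>E. \<not> (\<forall>u<m. \<forall>u'<m. u \<noteq> u' \<longrightarrow> many_disjoint_paths E (2 * k + 2) r (Inl u) (Inl u')))
    \<le> Pr ({..<m} \<times> {..<n}) p (\<lambda>E. \<not> DegOK E m (pool NV 0) tau0)
      + Pr ({..<m} \<times> {..<n}) p (\<lambda>E. \<not> DegOK E m (pool NV k) tau0)
      + (\<Sum>j<2 * k - 1. Pr ({..<m} \<times> {..<n}) p (\<lambda>E. \<not> ExpOK E NU NV j (sig j) (tau (Suc j))))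
      + real (card (Jset m n s)) * (1 - p) ^ (sig (2 * k - 1) * sig 0)"
proof -
  let ?X = "{..<m} \<times> {..<n}"
  let ?A = "\<lambda>E. \<not> DegOK E m (pool NV 0) tau0"
  let ?B = "\<lambda>E. \<not> DegOK E m (pool NV k) tau0"
  let ?C = "\<lambda>E. \<exists>j\<in>{..<2 * k - 1}. \<not> ExpOK E NU NV j (sig j) (tau (Suc j))"
  let ?F = "\<lambda>E. \<exists>\<iota>\<in>Jset m n s. Fail NU NV k sig \<iota> E"
  have "Pr ?X p (\<lambda>E. \<not> (\<forall>u<m. \<forall>u'<m. u \<noteq> u' \<longrightarrow> many_disjoint_paths E (2 * k + 2) r (Inl u) (Inl u')))
      \<le> Pr ?X p (\<lambda>E. ?A E \<or> (?B E \<or> (?C E \<or> ?F E)))"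
  proof (rule Pr_mono[OF p])
    fix E assume EX: "E \<subseteq> ?X" and nT: "\<not> (\<forall>u<m. \<forall>u'<m. u \<noteq> u' \<longrightarrow> many_disjoint_paths E (2 * k + 2) r (Inl u) (Inl u'))"
    show "?A E \<or> (?B E \<or> (?C E \<or> ?F E))"
    proof (rule ccontr)
      assume "\<not> (?A E \<or> (?B E \<or> (?C E \<or> ?F E)))"
      then have h: "DegOK E m (pool NV 0) tau0" "DegOK E m (pool NV k) tau0"
        "\<forall>j<2 * k - 1. ExpOK E NU NV j (sig j) (tau (Suc j))" "\<forall>\<iota>\<in>Jset m n s. \<not> Fail NU NV k sig \<iota> E"
        by auto
      have "\<forall>u<m. \<forall>u'<m. u \<noteq> u' \<longrightarrow> many_disjoint_paths E (2 * k + 2) r (Inl u) (Inl u')"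
        using det_main[OF k EX h s r s0 sS] by blast
      then show False using nT by blast
    qed
  qed
  also have "\<dots> \<le> Pr ?X p ?A + (Pr ?X p ?B + (Pr ?X p ?C + Pr ?X p ?F))"
    using Pr_or[OF p, of ?X ?A "\<lambda>E. ?B E \<or> (?C E \<or> ?F E)"] Pr_or[OF p, of ?X ?B "\<lambda>E. ?C E \<or> ?F E"]
      Pr_or[OF p, of ?X ?C ?F] by linarith
  also have "Pr ?X p ?C \<le> (\<Sum>j<2 * k - 1. Pr ?X p (\<lambda>E. \<not> ExpOK E NU NV j (sig j) (tau (Suc j))))"
    by (rule Pr_union[OF p]) simp
  also have "Pr ?X p ?F \<le> (\<Sum>\<iota>\<in>Jset m n s. Pr ?X p (Fail NU NV k sig \<iota>))"
    by (rule Pr_union[OF p finite_Jset])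
  also have "\<dots> \<le> (\<Sum>\<iota>\<in>Jset m n s. (1 - p) ^ (sig (2 * k - 1) * sig 0))"
    by (intro sum_mono Fail_bound[OF _ k NU NV p])
  also have "\<dots> = real (card (Jset m n s)) * (1 - p) ^ (sig (2 * k - 1) * sig 0)" by simp
  finally show ?thesis by linarith
qed

lemma one_minus_pow_le_exp:
  fixes p :: real assumes "0 \<le> p" "p \<le> 1"
  shows "(1 - p) ^ x \<le> exp (- p * real x)"
proof -
  have "(1 - p) ^ x \<le> exp (- p) ^ x"
    using assms by (intro power_mono) (auto simp: exp_ge_add_one_self[of "-p", simplified])
  also have "\<dots> = exp (- p * real x)" by (simp add: exp_of_nat_mult[symmetric] mult.commute)
  finally show ?thesis .
qed

lemma pow_le_exp_ln:
  assumes "NP \<le> n" "1 \<le> n"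
  shows "real NP ^ t \<le> exp (real t * ln (real n))"
proof -
  have "real NP ^ t \<le> real n ^ t" using assms by (intro power_mono) auto
  also have "\<dots> = real n powr real t" using assms by (simp add: powr_realpow)
  also have "\<dots> = exp (real t * ln (real n))" using assms by (simp add: powr_def)
  finally show ?thesis .
qed

lemma exp_num:
  fixes n NP NQ t t' :: nat and p :: real
  assumes n: "2 \<le> n" and p: "0 \<le> p" "p \<le> 1" and NP: "NP \<le> n" and NQ: "NQ \<le> n"
    and t: "1 \<le> t" and t'1: "real t' \<le> real NQ / 2" and t'2: "real t' \<le> p * real t * real NQ / (8 * ln (real n))"
    and pQ: "24 * ln (real n) \<le> p * real NQ"
  shows "real NP ^ t * real NQ ^ t' * (1 - p) ^ (t * (NQ - t')) \<le> 1 / real n ^ 3"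
proof -
  define L where "L = ln (real n)"
  have L: "0 < L" unfolding L_def using n by simp
  have tQ: "t' \<le> NQ" using t'1 by linarith
  have rdiff: "real (t * (NQ - t')) = real t * (real NQ - real t')" using tQ by (simp add: of_nat_diff)
  have "real NP ^ t * real NQ ^ t' * (1 - p) ^ (t * (NQ - t'))
      \<le> exp (real t * L) * exp (real t' * L) * exp (- p * (real t * (real NQ - real t')))"
    unfolding L_def rdiff[symmetric]
    by (intro mult_mono pow_le_exp_ln one_minus_pow_le_exp) (use n p NP NQ in auto)
  also have "\<dots> = exp (real t * L + real t' * L - p * real t * (real NQ - real t'))"
    by (simp add: exp_add[symmetric] algebra_simps)
  also have "\<dots> \<le> exp (- 3 * L)"
  proof -
    have a: "real t' * L \<le> p * real t * real NQ / 8"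
      using t'2 L unfolding L_def by (simp add: field_simps)
    have b: "real t * L \<le> p * real t * real NQ / 24"
    proof -
      have "real t * (24 * L) \<le> real t * (p * real NQ)" using pQ t unfolding L_def by (intro mult_left_mono) auto
      then show ?thesis by (simp add: algebra_simps)
    qed
    have c: "p * real t * (real NQ / 2) \<le> p * real t * (real NQ - real t')"
      using t'1 p t by (intro mult_left_mono) auto
    have d: "24 * L \<le> p * real t * real NQ"
    proof -
      have "p * real NQ * 1 \<le> p * real NQ * real t" using t p by (intro mult_left_mono) auto
      then show ?thesis using pQ unfolding L_def by (simp add: algebra_simps)
    qed
    have "real t * L + real t' * L - p * real t * (real NQ - real t') \<le> - 3 * L"
      using a b c d L by (simp add: algebra_simps) 
    then show ?thesis by simp
  qed
  also have "\<dots> = 1 / real n ^ 3"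
  proof -
    have "exp (3 * L) = real n powr (3::real)" unfolding L_def using n by (simp add: powr_def)
    also have "\<dots> = real n ^ 3" using n powr_realpow[of "real n" 3] by simp
    finally show ?thesis by (simp add: exp_minus divide_inverse)
  qed
  finally show ?thesis .
qed

lemma card_small_subsets: "card {A. A \<subseteq> {..<N::nat} \<and> card A \<le> s} \<le> (N + 1) ^ s"
proof -
  have eq: "{A. A \<subseteq> {..<N::nat} \<and> card A \<le> s} = (\<Union>i\<in>{..s}. {A. A \<subseteq> {..<N} \<and> card A = i})" by auto
  have "card {A. A \<subseteq> {..<N::nat} \<and> card A \<le> s} \<le> (\<Sum>i\<in>{..s}. card {A. A \<subseteq> {..<N} \<and> card A = i})"
    unfolding eq by (rule card_UN_le) simp
  also have "\<dots> = (\<Sum>i\<in>{..s}. N choose i)" by (simp add: n_subsets)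
  also have "\<dots> \<le> (\<Sum>i\<in>{..s}. (s choose i) * N ^ i)"
  proof (rule sum_mono)
    fix i assume "i \<in> {..s}"
    then have "1 \<le> s choose i" by (simp add: Suc_leI)
    then have "N ^ i \<le> (s choose i) * N ^ i" by simp
    then show "N choose i \<le> (s choose i) * N ^ i" using choose_le_pow' le_trans by blast
  qed
  also have "\<dots> = (N + 1) ^ s" using binomial[of N 1 s] by (simp add: mult.commute)
  finally show ?thesis .
qed

lemma card_Jset:
  assumes "m \<le> n"
  shows "card (Jset m n s) \<le> (n + 1) ^ (2 * s + 4)"
proof -
  let ?SU = "{A. A \<subseteq> {..<m} \<and> card A \<le> s + 2}"
  let ?SV = "{A. A \<subseteq> {..<n} \<and> card A \<le> s}"
  have sub: "Jset m n s \<subseteq> {..<m} \<times> {..<m} \<times> ?SU \<times> ?SV" unfolding Jset_def by auto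
  have "card (Jset m n s) \<le> card ({..<m} \<times> {..<m} \<times> ?SU \<times> ?SV)"
    by (rule card_mono[OF _ sub]) auto
  also have "\<dots> = m * m * card ?SU * card ?SV" by (simp add: card_cartesian_product)
  also have "\<dots> \<le> (n + 1) * (n + 1) * (n + 1) ^ (s + 2) * (n + 1) ^ s"
  proof (intro mult_le_mono)
    show "card ?SU \<le> (n + 1) ^ (s + 2)"
      using card_small_subsets[of m "s + 2"] power_mono[of "m + 1" "n + 1" "s + 2"] assms by simp
    show "card ?SV \<le> (n + 1) ^ s" using card_small_subsets[of n s] .
  qed (use assms in auto)
  also have "\<dots> = (n + 1) ^ (2 * s + 4)"
  proof -
    have e: "2 * s + 4 = ((1 + 1) + (s + 2)) + s" by simp
    show ?thesis unfolding e power_add by simp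
  qed
  finally show ?thesis .
qed

lemma floor_half:
  fixes x :: real and s :: nat
  assumes "2 * real s + 6 \<le> x"
  shows "nat \<lfloor>x / 2\<rfloor> + (s + 2) \<le> nat \<lfloor>x\<rfloor>" "x / 4 \<le> real (nat \<lfloor>x / 2\<rfloor>)"
    "real (nat \<lfloor>x\<rfloor>) \<le> x" "1 \<le> nat \<lfloor>x / 2\<rfloor>"
proof -
  have a: "real_of_int \<lfloor>x / 2\<rfloor> \<le> x / 2" "x - 1 < real_of_int \<lfloor>x\<rfloor>" "x / 2 - 1 < real_of_int \<lfloor>x / 2\<rfloor>"
    by linarith+
  have h: "real_of_int \<lfloor>x / 2\<rfloor> + real s + 2 < real_of_int \<lfloor>x\<rfloor> + 1" using a assms by linarith
  have "real_of_int (\<lfloor>x / 2\<rfloor> + int s + 2) < real_of_int (\<lfloor>x\<rfloor> + 1)" using h by simp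
  then have b: "\<lfloor>x / 2\<rfloor> + int s + 2 \<le> \<lfloor>x\<rfloor>" by linarith
  have c: "0 \<le> \<lfloor>x / 2\<rfloor>" using assms by simp
  show "nat \<lfloor>x / 2\<rfloor> + (s + 2) \<le> nat \<lfloor>x\<rfloor>" using b c by linarith
  have "x / 4 \<le> real_of_int \<lfloor>x / 2\<rfloor>" using a assms by linarith
  then show "x / 4 \<le> real (nat \<lfloor>x / 2\<rfloor>)" using c by simp
  show "real (nat \<lfloor>x\<rfloor>) \<le> x" using c b a by simp
  show "1 \<le> nat \<lfloor>x / 2\<rfloor>" using a assms by linarith
qed

lemma min_quarter:
  fixes a b c :: real assumes "a \<le> b / 4" "a \<le> c / 4"
  shows "a \<le> min b c / 4"
  using assms by (simp add: min_def)

lemma min_mult_le: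
  fixes g A \<kappa> :: real assumes "1 \<le> g" "0 \<le> \<kappa>"
  shows "min (g * A) \<kappa> \<le> g * min A \<kappa>"
proof (cases "A \<le> \<kappa>")
  case True
  then show ?thesis by (simp add: min_def)
next
  case False
  then have "min A \<kappa> = \<kappa>" by simp
  moreover have "\<kappa> \<le> g * \<kappa>" using assms mult_right_mono[of 1 g \<kappa>] by simp
  ultimately show ?thesis by (simp add: min_le_iff_disj)
qed

definition mnv :: "real \<Rightarrow> real \<Rightarrow> real \<Rightarrow> real \<Rightarrow> nat \<Rightarrow> nat \<Rightarrow> real" where
  "mnv gU gV NU NV j x = min ((if even j then gU else gV) * real x) ((if even j then NU else NV) / 2)"

primrec sq :: "real \<Rightarrow> real \<Rightarrow> real \<Rightarrow> real \<Rightarrow> nat \<Rightarrow> nat" where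
  "sq gU gV NU NV 0 = nat \<lfloor>gV / 2\<rfloor>"
| "sq gU gV NU NV (Suc j) = nat \<lfloor>mnv gU gV NU NV j (sq gU gV NU NV j) / 2\<rfloor>"

definition tq :: "real \<Rightarrow> real \<Rightarrow> real \<Rightarrow> real \<Rightarrow> nat \<Rightarrow> nat" where
  "tq gU gV NU NV j = (case j of 0 \<Rightarrow> 0 | Suc i \<Rightarrow> nat \<lfloor>mnv gU gV NU NV i (sq gU gV NU NV i)\<rfloor>)"

context
  fixes gU gV NU NV :: real and s :: nat
  assumes gU: "2 * real s + 6 \<le> gU" and gV: "2 * real s + 6 \<le> gV"
    and NU: "4 * real s + 12 \<le> NU" and NV: "4 * real s + 12 \<le> NV"
begin

lemma sq_pos: "1 \<le> sq gU gV NU NV j"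
proof (induction j)
  case 0 then show ?case using floor_half(4)[OF gV] by simp
next
  case (Suc j)
  have "2 * real s + 6 \<le> mnv gU gV NU NV j (sq gU gV NU NV j)"
  proof -
    have "2 * real s + 6 \<le> (if even j then gU else gV) * real (sq gU gV NU NV j)"
    proof -
      define g where "g = (if even j then gU else gV)"
      have gg: "2 * real s + 6 \<le> g" using gU gV unfolding g_def by simp
      have "g * 1 \<le> g * real (sq gU gV NU NV j)"
        using Suc gg by (intro mult_left_mono) auto
      then show ?thesis using gg unfolding g_def[symmetric] by linarith
    qed
    moreover have "2 * real s + 6 \<le> (if even j then NU else NV) / 2" using NU NV by auto
    ultimately show ?thesis unfolding mnv_def by simp
  qed
  then show ?case using floor_half(4) by simp
qed

lemma mnv_ge: "2 * real s + 6 \<le> mnv gU gV NU NV j (sq gU gV NU NV j)"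
proof -
  have "2 * real s + 6 \<le> (if even j then gU else gV) * real (sq gU gV NU NV j)"
  proof -
    define g where "g = (if even j then gU else gV)"
    have gg: "2 * real s + 6 \<le> g" using gU gV unfolding g_def by simp
    have "g * 1 \<le> g * real (sq gU gV NU NV j)"
      using sq_pos[of j] gg by (intro mult_left_mono) auto
    then show ?thesis using gg unfolding g_def[symmetric] by linarith
  qed
  moreover have "2 * real s + 6 \<le> (if even j then NU else NV) / 2" using NU NV by auto
  ultimately show ?thesis unfolding mnv_def by simp
qed

lemma sq0: "sq gU gV NU NV 0 + (s + 2) \<le> nat \<lfloor>gV\<rfloor>"
  using floor_half(1)[OF gV] by simp

lemma sqS: "sq gU gV NU NV (Suc j) + (s + 2) \<le> tq gU gV NU NV (Suc j)"
  using floor_half(1)[OF mnv_ge[of j]] by (simp add: tq_def)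

lemma tq_le: "real (tq gU gV NU NV (Suc j)) \<le> (if even j then NU else NV) / 2"
    "real (tq gU gV NU NV (Suc j)) \<le> (if even j then gU else gV) * real (sq gU gV NU NV j)"
  using floor_half(3)[OF mnv_ge[of j]] unfolding tq_def mnv_def by auto

lemma sq_lower:
  "min ((gV / 4) ^ (i + 1) * (gU / 4) ^ i) (min NU NV / 8) \<le> real (sq gU gV NU NV (2 * i)) \<and>
   min ((gV / 4) ^ (i + 1) * (gU / 4) ^ (i + 1)) (min NU NV / 8) \<le> real (sq gU gV NU NV (Suc (2 * i)))"
proof (induction i)
  case 0
  have a: "gV / 4 \<le> real (sq gU gV NU NV 0)" using floor_half(2)[OF gV] by simp
  have "mnv gU gV NU NV 0 (sq gU gV NU NV 0) / 4 \<le> real (sq gU gV NU NV (Suc 0))"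
    using floor_half(2)[OF mnv_ge[of 0]] by simp
  moreover have "min (gV / 4 * (gU / 4)) (min NU NV / 8) \<le> mnv gU gV NU NV 0 (sq gU gV NU NV 0) / 4"
  proof -
    have "gU * (gV / 4) \<le> gU * real (sq gU gV NU NV 0)" using a gU by (intro mult_left_mono) auto
    then show ?thesis unfolding mnv_def by (auto simp: min_def)
  qed
  ultimately have c2: "min (gV / 4 * (gU / 4)) (min NU NV / 8) \<le> real (sq gU gV NU NV (Suc 0))" by linarith
  have c1: "min (gV / 4) (min NU NV / 8) \<le> real (sq gU gV NU NV 0)"
    using a min.cobounded1[of "gV/4" "min NU NV / 8"] by linarith
  show ?case using c1 c2 by simp
next
  case (Suc i)
  define A where "A = (gV / 4) ^ (i + 1) * (gU / 4) ^ (i + 1)"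
  define \<kappa> where "\<kappa> = min NU NV / 8"
  have IH: "min A \<kappa> \<le> real (sq gU gV NU NV (Suc (2 * i)))" unfolding A_def \<kappa>_def by (rule conjunct2[OF Suc.IH])
  have g1: "1 \<le> gU / 4" "1 \<le> gV / 4" using gU gV by auto
  have kpos: "0 \<le> \<kappa>" unfolding \<kappa>_def using NU NV by auto
  have A0: "0 \<le> A" unfolding A_def using g1 by simp
  have e1: "Suc (Suc (2 * i)) = 2 * Suc i" by simp
  have odd1: "\<not> even (Suc (2 * i))" by simp
  have step1: "min (gV / 4 * A) \<kappa> \<le> real (sq gU gV NU NV (2 * Suc i))"
  proof -
    let ?x = "sq gU gV NU NV (Suc (2 * i))"
    have "mnv gU gV NU NV (Suc (2 * i)) ?x / 4 \<le> real (sq gU gV NU NV (2 * Suc i))"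
      using floor_half(2)[OF mnv_ge[of "Suc (2 * i)"]] e1 by (metis sq.simps(2))
    moreover have "min (gV / 4 * A) \<kappa> \<le> mnv gU gV NU NV (Suc (2 * i)) ?x / 4"
    proof -
      have "gV / 4 * min A \<kappa> \<le> gV / 4 * real ?x" using IH g1 by (intro mult_left_mono) auto
      moreover have "min (gV / 4 * A) \<kappa> \<le> gV / 4 * min A \<kappa>"
        using min_mult_le[OF g1(2) kpos] .
      moreover have "\<kappa> \<le> NV / 2 / 4" unfolding \<kappa>_def by auto
      ultimately show ?thesis unfolding mnv_def using odd1
        by (intro min_quarter) (auto simp: min_le_iff_disj)
    qed
    ultimately show ?thesis by linarith
  qed
  define A2 where "A2 = (gV / 4) ^ (Suc i + 1) * (gU / 4) ^ Suc i"
  have B: "gV / 4 * A = A2" unfolding A_def A2_def by simp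
  have step1': "min A2 \<kappa> \<le> real (sq gU gV NU NV (2 * Suc i))" using step1 unfolding B .
  have A20: "0 \<le> A2" unfolding A2_def using g1 by simp
  have ev2: "even (2 * Suc i)" by simp
  have step2: "min (gU / 4 * A2) \<kappa> \<le> real (sq gU gV NU NV (Suc (2 * Suc i)))"
  proof -
    let ?x = "sq gU gV NU NV (2 * Suc i)"
    have "mnv gU gV NU NV (2 * Suc i) ?x / 4 \<le> real (sq gU gV NU NV (Suc (2 * Suc i)))"
      using floor_half(2)[OF mnv_ge[of "2 * Suc i"]] by simp
    moreover have "min (gU / 4 * A2) \<kappa> \<le> mnv gU gV NU NV (2 * Suc i) ?x / 4"
    proof -
      have "gU / 4 * min A2 \<kappa> \<le> gU / 4 * real ?x" using step1' g1 by (intro mult_left_mono) auto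
      moreover have "min (gU / 4 * A2) \<kappa> \<le> gU / 4 * min A2 \<kappa>"
        using min_mult_le[OF g1(1) kpos] .
      moreover have "\<kappa> \<le> NU / 2 / 4" unfolding \<kappa>_def by auto
      ultimately show ?thesis unfolding mnv_def using ev2
        by (intro min_quarter) (auto simp: min_le_iff_disj)
    qed
    ultimately show ?thesis by linarith
  qed
  have C: "gU / 4 * A2 = (gV / 4) ^ (Suc i + 1) * (gU / 4) ^ (Suc i + 1)" unfolding A2_def by simp
  have s2': "min ((gV / 4) ^ (Suc i + 1) * (gU / 4) ^ (Suc i + 1)) \<kappa> \<le> real (sq gU gV NU NV (Suc (2 * Suc i)))"
    using step2 unfolding C .
  show ?case using step1' s2' unfolding A2_def \<kappa>_def by (intro conjI)
qed

end

lemma pool_range: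
  assumes "i < K" "N * K \<le> M"
  shows "pool N i \<subseteq> {..<M}"
proof
  fix x assume "x \<in> pool N i"
  then have "x < Suc i * N" by (simp add: pool_def)
  also have "Suc i * N \<le> K * N" using assms(1) by (intro mult_le_mono1) simp
  finally show "x \<in> {..<M}" using assms(2) by (simp add: mult.commute)
qed

lemma card_pool[simp]: "card (pool N i) = N"
  by (simp add: pool_def)

lemma deg_fail:
  fixes m n NV k tau0 :: nat and p :: real
  assumes "pool NV i \<subseteq> {..<n}" "tau0 \<le> NV" "0 \<le> p" "p \<le> 1"
  shows "Pr ({..<m} \<times> {..<n}) p (\<lambda>E. \<not> DegOK E m (pool NV i) tau0)
     \<le> real m ^ 1 * real NV ^ tau0 * (1 - p) ^ (1 * (NV - tau0))"
proof -
  have "Pr ({..<m} \<times> {..<n}) p (\<lambda>E. \<not> DegOK E m (pool NV i) tau0)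
      = Pr ({..<m} \<times> {..<n}) p (\<lambda>E. \<exists>a. a \<subseteq> {..<m} \<and> card a = 1 \<and> card (nb Pair E a (pool NV i)) < tau0)"
    unfolding DegOK_def by (simp add: not_le)
  also have "\<dots> \<le> real (card {..<m}) ^ 1 * real (card (pool NV i)) ^ tau0 * (1 - p) ^ (1 * (card (pool NV i) - tau0))"
    by (rule Exp_bound) (use assms in auto)
  finally show ?thesis by simp
qed

lemma exp_fail:
  fixes m n NU NV k j t t' :: nat and p :: real
  assumes k: "1 \<le> k" and j: "j < 2 * k - 1" and NU: "NU * k \<le> m" and NV: "NV * (k + 1) \<le> n"
    and t': "t' \<le> card (tgt NU NV j)" and p: "0 \<le> p" "p \<le> 1"
  shows "Pr ({..<m} \<times> {..<n}) p (\<lambda>E. \<not> ExpOK E NU NV j t t')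
     \<le> real (card (src NU NV j)) ^ t * real (card (tgt NU NV j)) ^ t' * (1 - p) ^ (t * (card (tgt NU NV j) - t'))"
proof -
  have j1: "j div 2 < k" "Suc j div 2 < k + 1" using j by auto
  have rU: "pool NU (j div 2) \<subseteq> {..<m}" by (rule pool_range[OF j1(1) NU])
  have rV1: "pool NV (j div 2) \<subseteq> {..<n}" by (rule pool_range[OF _ NV]) (use j1 in auto)
  have rV2: "pool NV (Suc j div 2) \<subseteq> {..<n}" by (rule pool_range[OF j1(2) NV])
  have "Pr ({..<m} \<times> {..<n}) p (\<lambda>E. \<not> ExpOK E NU NV j t t')
      = Pr ({..<m} \<times> {..<n}) p (\<lambda>E. \<exists>a. a \<subseteq> src NU NV j \<and> card a = t \<and> card (nb (prj j) E a (tgt NU NV j)) < t')"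
    unfolding ExpOK_def by (simp add: not_le)
  also have "\<dots> \<le> real (card (src NU NV j)) ^ t * real (card (tgt NU NV j)) ^ t' * (1 - p) ^ (t * (card (tgt NU NV j) - t'))"
  proof (rule Exp_bound[OF _ _ _ _ _ t' p])
    fix x y assume "x \<in> src NU NV j" "y \<in> tgt NU NV j"
    then show "prj j x y \<in> {..<m} \<times> {..<n}"
      using rU rV1 rV2 unfolding src_def tgt_def prj_def fl_def by (auto split: if_splits)
  next
    fix x y x' y' assume "prj j x y = prj j x' y'"
    then show "x = x' \<and> y = y'" unfolding prj_def fl_def by (auto split: if_splits)
  qed (auto simp: src_def tgt_def)
  finally show ?thesis .
qed

lemma pow_exp_ln: "0 < x \<Longrightarrow> x ^ N = exp (real N * ln x)"
proof -
  assume x: "0 < x"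
  have "x ^ N = x powr real N" using x by (simp add: powr_realpow)
  also have "\<dots> = exp (real N * ln x)" using x by (simp add: powr_def)
  finally show ?thesis .
qed

lemma prob_at_n:
  fixes m n k :: nat and p r :: real
  defines "NU \<equiv> m div k" and "NV \<equiv> n div (k + 1)" and "L \<equiv> ln (real n)"
    and "s \<equiv> (2 * k + 1) * nat \<lceil>r\<rceil>"
    and "gU \<equiv> p * real (m div k) / (8 * ln (real n))" and "gV \<equiv> p * real (n div (k + 1)) / (8 * ln (real n))"
  assumes k: "1 \<le> k" and n: "4 * k + 2 \<le> n" "3 \<le> n" and mn: "m \<le> n" and p: "0 \<le> p" "p \<le> 1"
    and Hg: "2 * real s + 6 \<le> gU" "2 * real s + 6 \<le> gV"
    and HN: "4 * real s + 12 \<le> real NU" "4 * real s + 12 \<le> real NV"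
    and Hf: "(2 * real s + 6) * ln (real n + 1) \<le>
              p * min ((gV / 4) ^ k * (gU / 4) ^ k) (min (real NU) (real NV) / 8) * (gV / 4)"
  shows "Pr ({..<m} \<times> {..<n}) p (\<lambda>E. \<not> (\<forall>u<m. \<forall>u'<m. u \<noteq> u' \<longrightarrow>
            many_disjoint_paths E (2 * k + 2) r (Inl u) (Inl u'))) \<le> 1 / real n"
proof -
  let ?X = "{..<m} \<times> {..<n}"
  have gU_def: "gU = p * real NU / (8 * L)" unfolding gU_def NU_def L_def ..
  have gV_def: "gV = p * real NV / (8 * L)" unfolding gV_def NV_def L_def ..
  define sig where "sig = sq gU gV (real NU) (real NV)"
  define tau where "tau = tq gU gV (real NU) (real NV)"
  define tau0 where "tau0 = nat \<lfloor>gV\<rfloor>"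
  have L1: "1 \<le> L" unfolding L_def using n ln_ge_iff[of "real n" 1] exp_le
    by (metis exp_gt_zero le_less_trans less_le_not_le not_le numeral_le_real_of_nat_iff of_nat_0_le_iff order_trans)
  have NUk: "NU * k \<le> m" unfolding NU_def by simp
  have NVk: "NV * (k + 1) \<le> n" unfolding NV_def by (metis div_times_less_eq_dividend)
  have NUn: "NU \<le> n" using mn unfolding NU_def by (meson div_le_dividend le_trans)
  have NVn: "NV \<le> n" unfolding NV_def by simp
  have s0: "sig 0 + (s + 2) \<le> tau0" unfolding sig_def tau0_def by (rule sq0[OF Hg HN])
  have sS: "\<forall>j. sig (Suc j) + (s + 2) \<le> tau (Suc j)" unfolding sig_def tau_def using sqS[OF Hg HN] by blast
  have r: "r \<le> real (Suc (nat \<lceil>r\<rceil>))" by linarith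
  have main: "Pr ?X p (\<lambda>E. \<not> (\<forall>u<m. \<forall>u'<m. u \<noteq> u' \<longrightarrow> many_disjoint_paths E (2 * k + 2) r (Inl u) (Inl u')))
    \<le> Pr ?X p (\<lambda>E. \<not> DegOK E m (pool NV 0) tau0)
      + Pr ?X p (\<lambda>E. \<not> DegOK E m (pool NV k) tau0)
      + (\<Sum>j<2 * k - 1. Pr ?X p (\<lambda>E. \<not> ExpOK E NU NV j (sig j) (tau (Suc j))))
      + real (card (Jset m n s)) * (1 - p) ^ (sig (2 * k - 1) * sig 0)"
    by (rule graph_main[OF k NUk NVk p _ r s0 sS]) (simp add: s_def)
  have gVhalf: "gV \<le> real NV / 2"
  proof -
    have "p / (8 * L) \<le> 1 / 2" using p L1 by (simp add: field_simps)
    then have "real NV * (p / (8 * L)) \<le> real NV * (1 / 2)" by (intro mult_left_mono) auto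
    then show ?thesis unfolding gV_def by (simp add: field_simps)
  qed
  have tau0le: "real tau0 \<le> gV" unfolding tau0_def using Hg(2) by linarith
  have pNV: "24 * ln (real n) \<le> p * real NV"
  proof -
    have e: "p * real NV = 8 * L * gV" unfolding gV_def using L1 by (simp add: field_simps)
    have "8 * L * 3 \<le> 8 * L * gV" using Hg(2) L1 by (intro mult_left_mono) auto
    then have "24 * L \<le> p * real NV" using e by simp
    then show ?thesis unfolding L_def .
  qed
  have pNU: "24 * ln (real n) \<le> p * real NU"
  proof -
    have e: "p * real NU = 8 * L * gU" unfolding gU_def using L1 by (simp add: field_simps)
    have "8 * L * 3 \<le> 8 * L * gU" using Hg(1) L1 by (intro mult_left_mono) auto
    then have "24 * L \<le> p * real NU" using e by simp
    then show ?thesis unfolding L_def .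
  qed
  have deg: "Pr ?X p (\<lambda>E. \<not> DegOK E m (pool NV i) tau0) \<le> 1 / real n ^ 3" if "i \<le> k" for i
  proof -
    have "pool NV i \<subseteq> {..<n}" by (rule pool_range[OF _ NVk]) (use that in auto)
    moreover have "tau0 \<le> NV" using tau0le gVhalf by linarith
    ultimately have "Pr ?X p (\<lambda>E. \<not> DegOK E m (pool NV i) tau0) \<le> real m ^ 1 * real NV ^ tau0 * (1 - p) ^ (1 * (NV - tau0))"
      using deg_fail p by blast
    also have "\<dots> \<le> 1 / real n ^ 3"
      by (rule exp_num) (use n mn p NVn tau0le gVhalf pNV in \<open>auto simp: gV_def L_def\<close>)
    finally show ?thesis .
  qed
  have ex: "Pr ?X p (\<lambda>E. \<not> ExpOK E NU NV j (sig j) (tau (Suc j))) \<le> 1 / real n ^ 3" if j: "j < 2 * k - 1" for j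
  proof -
    define NQ where "NQ = (if even j then NU else NV)"
    have cT: "card (tgt NU NV j) = NQ" unfolding NQ_def tgt_def by simp
    have cS: "card (src NU NV j) \<le> n" unfolding src_def using NUn NVn by simp
    have t1: "real (tau (Suc j)) \<le> real NQ / 2" unfolding tau_def NQ_def using tq_le(1)[OF Hg HN, of j] by (simp split: if_splits)
    have t2: "real (tau (Suc j)) \<le> (if even j then gU else gV) * real (sig j)"
      unfolding tau_def sig_def using tq_le(2)[OF Hg HN, of j] by simp
    have gq: "(if even j then gU else gV) = p * real NQ / (8 * ln (real n))"
      unfolding NQ_def gU_def gV_def L_def by simp
    have t2': "real (tau (Suc j)) \<le> p * real (sig j) * real NQ / (8 * ln (real n))"
      using t2 unfolding gq by (simp add: field_simps)
    have pQ: "24 * ln (real n) \<le> p * real NQ" unfolding NQ_def using pNU pNV by simp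
    have "Pr ?X p (\<lambda>E. \<not> ExpOK E NU NV j (sig j) (tau (Suc j)))
       \<le> real (card (src NU NV j)) ^ sig j * real (card (tgt NU NV j)) ^ tau (Suc j) * (1 - p) ^ (sig j * (card (tgt NU NV j) - tau (Suc j)))"
      by (rule exp_fail[OF k j NUk NVk _ p]) (use t1 cT in simp)
    also have "\<dots> \<le> 1 / real n ^ 3" unfolding cT
    proof (rule exp_num[OF _ p cS _ _ t1 t2' pQ])
      show "2 \<le> n" using n by simp
      show "NQ \<le> n" unfolding NQ_def using NUn NVn by simp
      show "1 \<le> sig j" unfolding sig_def by (rule sq_pos[OF Hg HN])
    qed
    finally show ?thesis .
  qed
  have sumex: "(\<Sum>j<2 * k - 1. Pr ?X p (\<lambda>E. \<not> ExpOK E NU NV j (sig j) (tau (Suc j)))) \<le> real (2 * k - 1) * (1 / real n ^ 3)"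
    using sum_mono[of "{..<2 * k - 1}" "\<lambda>j. Pr ?X p (\<lambda>E. \<not> ExpOK E NU NV j (sig j) (tau (Suc j)))" "\<lambda>_. 1 / real n ^ 3"] ex
    by simp
  define A where "A = (gV / 4) ^ k * (gU / 4) ^ k"
  define \<kappa> where "\<kappa> = min (real NU) (real NV) / 8"
  have kk: "Suc (2 * (k - 1)) = 2 * k - 1" "k - 1 + 1 = k" using k by auto
  have lowS: "min A \<kappa> \<le> real (sig (2 * k - 1))"
    using conjunct2[OF sq_lower[OF Hg HN, of "k - 1"]] unfolding kk A_def \<kappa>_def sig_def .
  have low0: "gV / 4 \<le> real (sig 0)" unfolding sig_def using floor_half(2)[OF Hg(2)] by simp
  have mpos: "0 \<le> min A \<kappa>" unfolding A_def \<kappa>_def using Hg by simp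
  have gV0: "0 \<le> gV / 4" using Hg by simp
  have prod: "min A \<kappa> * (gV / 4) \<le> real (sig (2 * k - 1) * sig 0)"
    using mult_mono[OF lowS low0 _ gV0] by simp
  have Hf': "(2 * real s + 6) * ln (real n + 1) \<le> p * real (sig (2 * k - 1) * sig 0)"
  proof -
    have "p * (min A \<kappa> * (gV / 4)) \<le> p * real (sig (2 * k - 1) * sig 0)"
      using prod p by (intro mult_left_mono) auto
    then show ?thesis using Hf unfolding A_def \<kappa>_def by (simp add: mult.assoc)
  qed
  have meet: "real (card (Jset m n s)) * (1 - p) ^ (sig (2 * k - 1) * sig 0) \<le> 1 / real n ^ 2"
  proof -
    have n1: "0 < real n + 1" by simp
    have "real (card (Jset m n s)) \<le> (real n + 1) ^ (2 * s + 4)"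
      using card_Jset[OF mn, of s] by (metis of_nat_1 of_nat_add of_nat_le_iff of_nat_power)
    also have "\<dots> = exp (real (2 * s + 4) * ln (real n + 1))" by (rule pow_exp_ln[OF n1])
    finally have c: "real (card (Jset m n s)) \<le> exp (real (2 * s + 4) * ln (real n + 1))" .
    have e: "(1 - p) ^ (sig (2 * k - 1) * sig 0) \<le> exp (- p * real (sig (2 * k - 1) * sig 0))"
      by (rule one_minus_pow_le_exp[OF p])
    have "real (card (Jset m n s)) * (1 - p) ^ (sig (2 * k - 1) * sig 0)
        \<le> exp (real (2 * s + 4) * ln (real n + 1)) * exp (- p * real (sig (2 * k - 1) * sig 0))"
      using p by (intro mult_mono c e) auto
    also have "\<dots> = exp (real (2 * s + 4) * ln (real n + 1) - p * real (sig (2 * k - 1) * sig 0))"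
      by (simp add: exp_add[symmetric])
    also have "\<dots> \<le> exp (- 2 * ln (real n + 1))"
    proof -
      have "real (2 * s + 4) * ln (real n + 1) = (2 * real s + 6) * ln (real n + 1) - 2 * ln (real n + 1)"
        by (simp add: algebra_simps)
      then show ?thesis using Hf' by simp
    qed
    also have "\<dots> = 1 / (real n + 1) ^ 2"
      using pow_exp_ln[OF n1, of 2] by (simp add: exp_minus divide_inverse)
    also have "\<dots> \<le> 1 / real n ^ 2"
      using n by (intro divide_left_mono power_mono) auto
    finally show ?thesis .
  qed
  have "Pr ?X p (\<lambda>E. \<not> (\<forall>u<m. \<forall>u'<m. u \<noteq> u' \<longrightarrow> many_disjoint_paths E (2 * k + 2) r (Inl u) (Inl u')))
      \<le> 1 / real n ^ 3 + 1 / real n ^ 3 + real (2 * k - 1) * (1 / real n ^ 3) + 1 / real n ^ 2"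
    using main deg[of 0] deg[of k] sumex meet by simp
  also have "\<dots> = real (2 * k + 1) / real n ^ 3 + 1 / real n ^ 2"
    using k by (simp add: of_nat_diff add_divide_distrib[symmetric])
  also have "\<dots> \<le> 1 / real n"
  proof -
    have n0: "0 < real n" using n by simp
    have a: "real (2 * k + 1) \<le> real n / 2" using n by simp
    have "real (2 * k + 1) / real n ^ 3 \<le> (real n / 2) / real n ^ 3"
      using a n0 by (intro divide_right_mono) auto
    also have "\<dots> = 1 / (2 * real n ^ 2)" using n0 by (simp add: field_simps power3_eq_cube power2_eq_square)
    finally have b: "real (2 * k + 1) / real n ^ 3 \<le> 1 / (2 * real n ^ 2)" .
    have c: "3 / (2 * real n ^ 2) \<le> 1 / real n"
      using n n0 by (simp add: field_simps power2_eq_square)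
    show ?thesis using b c by (simp add: field_simps)
  qed
  finally show ?thesis .
qed

lemma key_ineq:
  fixes m n Lg :: real and k j :: nat
  assumes m: "1 \<le> m" "m \<le> n" and Lg: "1 \<le> Lg" and k: "1 \<le> k"
    and j: "(j = 2 \<and> jn = 1 \<and> jm = 1) \<or> (j = 2 * k + 2 \<and> jn = k + 1 \<and> jm = k)"
  defines "dd \<equiv> 2 * real k + 1"
  defines "e \<equiv> (dd - 1) / (2 * dd)"
  defines "p1 \<equiv> Lg powr (1 / dd) / (m powr e * n powr e)"
  shows "n powr (1 / dd) \<le> p1 ^ j * n ^ (jn) * m ^ (jm)"
proof -
  have n: "1 \<le> n" using m by linarith
  have dpos: "0 < dd" unfolding dd_def by simp
  have p1pos: "0 < p1" unfolding p1_def using m n Lg by simp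
  define a where "a = ln m"
  define b where "b = ln n"
  define l where "l = ln Lg"
  have a0: "0 \<le> a" "a \<le> b" unfolding a_def b_def using m by auto
  have l0: "0 \<le> l" unfolding l_def using Lg by simp
  have lnp1: "ln p1 = l / dd - e * a - e * b"
    unfolding p1_def a_def b_def l_def using m n Lg
    by (simp add: ln_div ln_mult ln_powr)
  have pos: "0 < p1 ^ j * n ^ (jn) * m ^ (jm)" using p1pos m n by simp
  have lnR: "ln (p1 ^ j * n ^ (jn) * m ^ (jm)) = real j * ln p1 + real (jn) * b + real (jm) * a"
    unfolding a_def b_def using p1pos m n by (simp add: ln_mult ln_realpow)
  have lnL: "ln (n powr (1 / dd)) = b / dd" unfolding b_def using n by (simp add: ln_powr)
  have "b / dd \<le> real j * ln p1 + real (jn) * b + real (jm) * a"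
    using j
  proof
    assume j2': "j = 2 \<and> jn = 1 \<and> jm = 1"
    then have j2: "j = 2" and jd: "jn = 1" "jm = 1" by auto
    have "real j * ln p1 + real (jn) * b + real (jm) * a - b / dd = 2 * l / dd + a / dd"
      unfolding j2 jd lnp1 e_def using dpos by (simp add: field_simps)
    moreover have "0 \<le> 2 * l / dd + a / dd" using l0 a0 dpos by simp
    ultimately show ?thesis by linarith
  next
    assume jk': "j = 2 * k + 2 \<and> jn = k + 1 \<and> jm = k"
    then have jk: "j = 2 * k + 2" and jd: "jn = k + 1" "jm = k" by auto
    have "real j * ln p1 + real (jn) * b + real (jm) * a - b / dd
        = (2 * real k + 2) * l / dd + (b - a) * real k / dd"
    proof -
      have e': "e = real k / dd" unfolding e_def dd_def by (simp add: field_simps)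
      show ?thesis unfolding jd jk lnp1 e' using dpos
        by (simp add: field_simps) (simp add: dd_def algebra_simps)
    qed
    moreover have "0 \<le> (2 * real k + 2) * l / dd + (b - a) * real k / dd" using l0 a0 dpos by simp
    ultimately show ?thesis by linarith
  qed
  then have "ln (n powr (1 / dd)) \<le> ln (p1 ^ j * n ^ (jn) * m ^ (jm))"
    unfolding lnL lnR .
  moreover have npos: "0 < n powr (1 / dd)" using n by simp
  ultimately show ?thesis using ln_le_cancel_iff[OF npos pos] by blast
qed

lemma ln2_ge_half: "1 / 2 \<le> ln (2::real)"
proof -
  have "ln (1 / 2 :: real) \<le> 1 / 2 - 1" by (rule ln_le_minus_one) simp
  then show ?thesis by (simp add: ln_div)
qed

lemma div_lower:
  fixes m k :: nat assumes "1 \<le> k" "2 * k \<le> m"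
  shows "real m / (2 * real k) \<le> real (m div k)"
proof -
  have "m = k * (m div k) + m mod k" by simp
  moreover have "m mod k < k" using assms by simp
  ultimately have "real m < real k * real (m div k) + real k"
    by (metis add_less_cancel_left of_nat_add of_nat_less_iff of_nat_mult)
  then have "real m / real k - 1 < real (m div k)" using assms by (simp add: field_simps)
  moreover have "real m / (2 * real k) \<le> real m / real k - 1"
  proof -
    have "2 * real k \<le> real m" using assms by simp
    then show ?thesis using assms by (simp add: field_simps)
  qed
  ultimately show ?thesis by linarith
qed

lemma pow_ge_self: "1 \<le> (x::real) \<Longrightarrow> 1 \<le> j \<Longrightarrow> x \<le> x ^ j"
  by (metis One_nat_def power_increasing power_one_right)

lemma numeric_basic:
  fixes k d m n :: nat and c0 :: real
  defines "Lg \<equiv> log 2 (real m * real n)"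
  defines "p1 \<equiv> Lg powr (1 / real d) / (real m powr ((real d - 1) / (2 * real d)) * real n powr ((real d - 1) / (2 * real d)))"
  defines "C1 \<equiv> 2 ^ (10 * d) * c0"
  assumes k: "1 \<le> k" and d: "d = 2 * k + 1" and c0: "1 \<le> c0"
    and H1: "p1 * real m \<le> p1 * real n" and H2: "(log 2 (real n)) ^ 4 \<le> p1 * real m"
    and A1: "100 * real d ^ 2 * C1 \<le> ln (real n)"
    and A2: "C1 * (64 * real d) ^ (d + 2) * ln (real n) ^ (d + 2) \<le> real n powr (1 / real d)"
  shows "1 \<le> C1" "1 \<le> ln (real n)" "3 \<le> n" "1 \<le> m" "m \<le> n" "0 < p1" "C1 * p1 \<le> 1"
    "ln (real n) ^ 4 \<le> p1 * real m" "ln (real n) \<le> log 2 (real n)" "log 2 (real n) \<le> 2 * ln (real n)"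
    "1 \<le> Lg"
proof -
  define L where "L = ln (real n)"
  have d3: "3 \<le> d" using d k by simp
  have C1: "1 \<le> C1"
  proof -
    have "(1::real) \<le> 2 ^ (10 * d)" by simp
    then have "1 * 1 \<le> (2::real) ^ (10 * d) * c0" using c0 by (intro mult_mono) auto
    then show ?thesis unfolding C1_def by simp
  qed
  show "1 \<le> C1" by (fact C1)
  have L1: "1 \<le> L"
  proof -
    have "1 \<le> 100 * real d ^ 2 * C1"
    proof -
      have "1 \<le> real d ^ 2" using d3 by simp
      then have "1 \<le> 100 * real d ^ 2" by simp
      then have "1 * 1 \<le> 100 * real d ^ 2 * C1" using C1 by (intro mult_mono) auto
      then show ?thesis by simp
    qed
    then show ?thesis using A1 unfolding L_def by linarith
  qed
  show "1 \<le> ln (real n)" using L1 unfolding L_def .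
  have npos: "0 < real n"
  proof (rule ccontr)
    assume "\<not> 0 < real n"
    then have "n = 0" by simp
    then show False using L1 unfolding L_def by simp
  qed
  have n3: "3 \<le> n"
  proof (rule ccontr)
    assume "\<not> 3 \<le> n"
    then have "real n \<le> 2" by simp
    then have "ln (real n) \<le> ln 2" using npos by simp
    then show False using L1 ln_2_less_1 unfolding L_def by linarith
  qed
  show "3 \<le> n" by (fact n3)
  have l2: "log 2 (real n) = L / ln 2" unfolding L_def log_def ..
  have l2a: "L \<le> log 2 (real n)" unfolding l2 using L1 ln_2_less_1 ln2_ge_half by (simp add: field_simps)
  have l2b: "log 2 (real n) \<le> 2 * L" unfolding l2 using L1 ln_2_less_1 ln2_ge_half by (simp add: field_simps)
  show "ln (real n) \<le> log 2 (real n)" "log 2 (real n) \<le> 2 * ln (real n)" using l2a l2b unfolding L_def by auto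
  have l4: "1 \<le> (log 2 (real n)) ^ 4" using l2a L1 by simp
  have pm: "0 < p1 * real m" using H2 l4 by linarith
  have p0: "0 \<le> p1" unfolding p1_def by simp
  have m1: "1 \<le> m" using pm by (cases m) auto
  show "1 \<le> m" by (fact m1)
  have p1pos: "0 < p1" using pm p0 by (cases "p1 = 0") auto
  show "0 < p1" by (fact p1pos)
  show mn: "m \<le> n" using H1 p1pos by simp
  have Lg1: "1 \<le> Lg"
  proof -
    have "1 * 3 \<le> real m * real n" using m1 n3 by (intro mult_mono) auto
    then have "2 \<le> real m * real n" by simp
    then show ?thesis unfolding Lg_def by simp
  qed
  show "1 \<le> Lg" by (fact Lg1)
  have Lg2: "Lg \<le> 2 * log 2 (real n)"
  proof -
    have "real m * real n \<le> real n * real n" using mn by (simp add: mult_right_mono)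
    then have "Lg \<le> log 2 (real n * real n)" unfolding Lg_def using m1 npos by simp
    also have "\<dots> = 2 * log 2 (real n)" using npos by (simp add: log_mult)
    finally show ?thesis .
  qed
  define e where "e = (real d - 1) / (2 * real d)"
  have e3: "1 / 3 \<le> e" unfolding e_def using d3 by (simp add: field_simps)
  have p1le: "p1 \<le> Lg / real n powr (1 / 3)"
  proof -
    have a: "Lg powr (1 / real d) \<le> Lg" using Lg1 d3 powr_mono[of "1 / real d" 1 Lg] by simp
    have b: "1 \<le> real m powr e" using m1 e3 by (simp add: ge_one_powr_ge_zero)
    have c: "real n powr (1 / 3) \<le> real n powr e" using e3 n3 by (intro powr_mono) auto
    have "p1 = Lg powr (1 / real d) / (real m powr e * real n powr e)" unfolding p1_def e_def ..
    also have "\<dots> \<le> Lg / (1 * real n powr (1 / 3))"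
      using a b c Lg1 npos by (intro frac_le mult_mono) auto
    finally show ?thesis by simp
  qed
  have big: "4 * C1 * L \<le> real n powr (1 / 3)"
  proof -
    have "4 * C1 * L \<le> C1 * (64 * real d) ^ (d + 2) * L ^ (d + 2)"
    proof -
      have "64 * real d \<le> (64 * real d) ^ (d + 2)" by (rule pow_ge_self) (use d3 in auto)
      moreover have "4 \<le> 64 * real d" using d3 by simp
      ultimately have "4 \<le> (64 * real d) ^ (d + 2)" by linarith
      moreover have "L \<le> L ^ (d + 2)" by (rule pow_ge_self[OF L1]) simp
      ultimately have "4 * L \<le> (64 * real d) ^ (d + 2) * L ^ (d + 2)" using L1 by (intro mult_mono) auto
      then show ?thesis using C1 by (simp add: mult.assoc mult_left_mono)
    qed
    also have "\<dots> \<le> real n powr (1 / real d)" using A2 unfolding L_def .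
    also have "\<dots> \<le> real n powr (1 / 3)" using d3 n3 by (intro powr_mono) (auto simp: field_simps)
    finally show ?thesis .
  qed
  have "C1 * p1 \<le> C1 * (Lg / real n powr (1 / 3))" using p1le C1 by (intro mult_left_mono) auto
  also have "\<dots> \<le> C1 * (4 * L / real n powr (1 / 3))"
    using Lg2 l2b C1 npos by (intro mult_left_mono divide_right_mono) auto
  also have "\<dots> \<le> 1" using big npos by (simp add: field_simps)
  finally show Cp: "C1 * p1 \<le> 1" .
  have "L ^ 4 \<le> (log 2 (real n)) ^ 4" using l2a L1 by (intro power_mono) auto
  then show "ln (real n) ^ 4 \<le> p1 * real m" using H2 unfolding L_def by linarith
qed

lemma numeric_main:
  fixes k d m n :: nat and c0 :: real
  defines "Lg \<equiv> log 2 (real m * real n)"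
  defines "p1 \<equiv> Lg powr (1 / real d) / (real m powr ((real d - 1) / (2 * real d)) * real n powr ((real d - 1) / (2 * real d)))"
  defines "C1 \<equiv> 2 ^ (10 * d) * c0"
  assumes k: "1 \<le> k" and d: "d = 2 * k + 1" and c0: "1 \<le> c0"
    and H1: "p1 * real m \<le> p1 * real n" and H2: "(log 2 (real n)) ^ 4 \<le> p1 * real m"
    and A1: "100 * real d ^ 2 * C1 \<le> ln (real n)"
    and A2: "C1 * (64 * real d) ^ (d + 2) * ln (real n) ^ (d + 2) \<le> real n powr (1 / real d)"
  shows "1 - real n powr (-1) \<le> bip_prob m n (C1 * p1) (\<lambda>E. \<forall>u<m. \<forall>u'<m. u \<noteq> u' \<longrightarrow>
           many_disjoint_paths E (d + 1) (2 ^ (10 * d) * c0 * log 2 (real n)) (Inl u) (Inl u'))"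
proof -
  note B = numeric_basic[OF k d c0 H1[unfolded p1_def Lg_def] H2[unfolded p1_def Lg_def] A1[unfolded C1_def] A2[unfolded C1_def],
      folded p1_def Lg_def C1_def]
  define L where "L = ln (real n)"
  define p where "p = C1 * p1"
  define r where "r = 2 ^ (10 * d) * c0 * log 2 (real n)"
  define s where "s = (2 * k + 1) * nat \<lceil>r\<rceil>"
  define NU where "NU = m div k"
  define NV where "NV = n div (k + 1)"
  define gU where "gU = p * real NU / (8 * L)"
  define gV where "gV = p * real NV / (8 * L)"
  have C1: "1 \<le> C1" using B(1) .
  have L1: "1 \<le> L" using B(2) unfolding L_def .
  have n3: "3 \<le> n" using B(3) .
  have m1: "1 \<le> m" using B(4) .
  have mn: "m \<le> n" using B(5) .
  have p1pos: "0 < p1" using B(6) unfolding p1_def .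
  have p1: "p \<le> 1" using B(7) unfolding p_def p1_def .
  have L4: "L ^ 4 \<le> p1 * real m" using B(8) unfolding L_def p1_def .
  have l2a: "L \<le> log 2 (real n)" using B(9) unfolding L_def .
  have l2b: "log 2 (real n) \<le> 2 * L" using B(10) unfolding L_def .
  have Lg1: "1 \<le> Lg" using B(11) .
  have d3: "3 \<le> d" using d k by simp
  have dR: "real d = 2 * real k + 1" using d by simp
  have p0: "0 \<le> p" unfolding p_def using C1 p1pos by simp
  have rC: "r = C1 * log 2 (real n)" unfolding r_def C1_def by simp
  have r0: "0 \<le> r" unfolding rC using C1 L1 l2a by simp
  have rb: "r \<le> 2 * C1 * L" unfolding rC using l2b C1 by (simp add: mult.assoc mult_left_mono)
  have sb: "real s \<le> real d * (2 * C1 * L + 1)"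
  proof -
    have "real (nat \<lceil>r\<rceil>) \<le> r + 1" using r0 by linarith
    then have "real (nat \<lceil>r\<rceil>) \<le> 2 * C1 * L + 1" using rb by linarith
    then have "real d * real (nat \<lceil>r\<rceil>) \<le> real d * (2 * C1 * L + 1)" by (intro mult_left_mono) auto
    then show ?thesis unfolding s_def d[symmetric] of_nat_mult .
  qed
  have CL: "1 \<le> C1 * L"
  proof -
    have "1 * 1 \<le> C1 * L" using C1 L1 by (intro mult_mono) auto
    then show ?thesis by simp
  qed
  have s6: "2 * real s + 6 \<le> 8 * real d * C1 * L"
  proof -
    have "2 * real s + 6 \<le> 4 * real d * (C1 * L) + (2 * real d + 6)" using sb by (simp add: algebra_simps)
    moreover have "2 * real d + 6 \<le> 4 * real d * (C1 * L)"
    proof -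
      have "4 * real d * 1 \<le> 4 * real d * (C1 * L)" using CL by (intro mult_left_mono) auto
      then show ?thesis using d3 by linarith
    qed
    ultimately show ?thesis by (simp add: algebra_simps)
  qed
  have p1le: "p1 \<le> 1"
  proof -
    have "p1 * 1 \<le> p1 * C1" using C1 p1pos by (intro mult_left_mono) auto
    then show ?thesis using p1 unfolding p_def by (simp add: mult.commute)
  qed
  have mL: "L ^ 4 \<le> real m"
  proof -
    have "p1 * real m \<le> 1 * real m" using p1le by (intro mult_right_mono) auto
    then show ?thesis using L4 by simp
  qed
  have LL0: "100 * real d ^ 2 * C1 \<le> L" using A1 unfolding L_def C1_def .
  have Ld: "100 * real d ^ 2 \<le> L"
  proof -
    have "100 * real d ^ 2 * 1 \<le> 100 * real d ^ 2 * C1" using C1 by (intro mult_left_mono) auto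
    then show ?thesis using LL0 by simp
  qed
  have LleL4: "L \<le> L ^ 4" by (rule pow_ge_self[OF L1]) simp
  have m2k: "2 * k \<le> m"
  proof -
    have a: "real d \<le> real d ^ 2" by (rule pow_ge_self) (use d3 in auto)
    have "real (2 * k) \<le> 100 * real d ^ 2" using a d by simp
    then show ?thesis using Ld LleL4 mL by linarith
  qed
  have m4k: "4 * k + 2 \<le> m"
  proof -
    have a: "real d \<le> real d ^ 2" by (rule pow_ge_self) (use d3 in auto)
    have "real (4 * k + 2) \<le> 100 * real d ^ 2" using a d by simp
    then show ?thesis using Ld LleL4 mL by linarith
  qed
  have Lpos: "0 < L" using L1 by simp
  define M where "M = real m / (2 * real d)"
  have NUM: "M \<le> real NU"
  proof -
    have "real m / (2 * real k) \<le> real NU" unfolding NU_def by (rule div_lower[OF k m2k])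
    moreover have "real m / (2 * real d) \<le> real m / (2 * real k)"
      using k d by (intro divide_left_mono) auto
    ultimately show ?thesis unfolding M_def by linarith
  qed
  have NVn: "real n / (2 * real d) \<le> real NV"
  proof -
    have "real n / (2 * real (k + 1)) \<le> real NV" unfolding NV_def
      by (rule div_lower) (use m4k mn in auto)
    moreover have "real n / (2 * real d) \<le> real n / (2 * real (k + 1))"
      using k d by (intro divide_left_mono) auto
    ultimately show ?thesis by linarith
  qed
  have NVM: "M \<le> real NV"
  proof -
    have "M \<le> real n / (2 * real d)" unfolding M_def using mn d by (intro divide_right_mono) auto
    then show ?thesis using NVn by linarith
  qed
  have ML4: "L ^ 4 / (2 * real d) \<le> M" unfolding M_def using mL d by (intro divide_right_mono) auto
  have s12: "4 * real s + 12 \<le> 16 * real d * C1 * L" using s6 by linarith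
  have HNM: "16 * real d * C1 * L \<le> M"
  proof -
    have L3: "L \<le> L ^ 3" by (rule pow_ge_self[OF L1]) simp
    have X0: "0 \<le> real d ^ 2 * C1" using C1 by simp
    have "32 * (real d ^ 2 * C1) \<le> 100 * (real d ^ 2 * C1)" using X0 by linarith
    then have "32 * real d ^ 2 * C1 \<le> 100 * real d ^ 2 * C1" by (simp add: mult.assoc)
    then have "32 * real d ^ 2 * C1 \<le> L ^ 3" using LL0 L3 by linarith
    then have "32 * real d ^ 2 * C1 * L \<le> L ^ 3 * L" using Lpos by (intro mult_right_mono) auto
    also have "\<dots> = L ^ 4" by (simp add: power_Suc2[symmetric])
    finally have "32 * real d ^ 2 * C1 * L \<le> L ^ 4" .
    then have "16 * real d * C1 * L \<le> L ^ 4 / (2 * real d)" using d3 by (simp add: field_simps power2_eq_square)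
    then show ?thesis using ML4 by linarith
  qed
  have HN1: "4 * real s + 12 \<le> real NU" using s12 HNM NUM by linarith
  have HN2: "4 * real s + 12 \<le> real NV" using s12 HNM NVM by linarith
  have pM: "C1 * L ^ 4 / (2 * real d) \<le> p * M"
  proof -
    have "C1 * L ^ 4 \<le> C1 * (p1 * real m)" using L4 C1 by (intro mult_left_mono) auto
    then show ?thesis unfolding p_def M_def using d3 by (simp add: field_simps)
  qed
  have gb: "C1 * L ^ 3 / (16 * real d) \<le> p * N / (8 * L)" if "M \<le> N" for N
  proof -
    have "p * M \<le> p * N" using that p0 by (intro mult_left_mono) auto
    then have "C1 * L ^ 4 / (2 * real d) \<le> p * N" using pM by linarith
    then have "C1 * L ^ 4 / (2 * real d) / (8 * L) \<le> p * N / (8 * L)" using Lpos by (intro divide_right_mono) auto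
    moreover have "C1 * L ^ 4 / (2 * real d) / (8 * L) = C1 * L ^ 3 / (16 * real d)"
      using Lpos d3 by (simp add: field_simps power_Suc2[symmetric] power_numeral_reduce)
    ultimately show ?thesis by simp
  qed
  have Hgb: "8 * real d * C1 * L \<le> C1 * L ^ 3 / (16 * real d)"
  proof -
    have a: "real d \<le> real d ^ 2" by (rule pow_ge_self) (use d3 in auto)
    have "12 * real d \<le> L" using Ld a by linarith
    then have "(12 * real d) ^ 2 \<le> L ^ 2" by (intro power_mono) auto
    then have "144 * real d ^ 2 \<le> L ^ 2" by (simp add: power_mult_distrib)
    then have "128 * real d ^ 2 \<le> L ^ 2" using zero_le_power2[of "real d"] by linarith
    then have "128 * real d ^ 2 * (C1 * L) \<le> L ^ 2 * (C1 * L)" using CL by (intro mult_right_mono) auto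
    then have "128 * real d ^ 2 * C1 * L \<le> C1 * L ^ 3" by (simp add: power_numeral_reduce algebra_simps)
    then show ?thesis using d3 by (simp add: field_simps power2_eq_square)
  qed
  have Hg1: "2 * real s + 6 \<le> gU" unfolding gU_def using s6 Hgb gb[OF NUM] by linarith
  have Hg2: "2 * real s + 6 \<le> gV" unfolding gV_def using s6 Hgb gb[OF NVM] by linarith
  define T where "T = 16 * real d * C1 * L ^ 2"
  have lhsT: "(2 * real s + 6) * ln (real n + 1) \<le> T"
  proof -
    have "real n * 3 \<le> real n * real n" using n3 by (intro mult_left_mono) auto
    then have "real n + 1 \<le> real n * real n" using n3 by linarith
    then have "ln (real n + 1) \<le> ln (real n * real n)" using n3 by simp
    also have "\<dots> = 2 * L" unfolding L_def using n3 by (simp add: ln_mult)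
    finally have l: "ln (real n + 1) \<le> 2 * L" .
    have "(2 * real s + 6) * ln (real n + 1) \<le> (8 * real d * C1 * L) * (2 * L)"
      using s6 l n3 C1 Lpos by (intro mult_mono) auto
    then show ?thesis unfolding T_def by (simp add: power2_eq_square algebra_simps)
  qed
  have p1eq: "p1 = Lg powr (1 / (2 * real k + 1)) / (real m powr ((2 * real k + 1 - 1) / (2 * (2 * real k + 1))) *
      real n powr ((2 * real k + 1 - 1) / (2 * (2 * real k + 1))))" unfolding p1_def dR ..
  have ndeq: "real n powr (1 / real d) = real n powr (1 / (2 * real k + 1))" unfolding dR ..
  have mR: "1 \<le> real m" "real m \<le> real n" using m1 mn by auto
  have K1: "real n powr (1 / real d) \<le> p1 ^ 2 * real n ^ 1 * real m ^ 1"
    unfolding ndeq p1eq by (rule key_ineq[OF mR Lg1 k]) simp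
  have K2: "real n powr (1 / real d) \<le> p1 ^ (2 * k + 2) * real n ^ (k + 1) * real m ^ k"
    unfolding ndeq p1eq by (rule key_ineq[OF mR Lg1 k]) simp
  define W where "W = real n powr (1 / real d)"
  have d64: "1 \<le> 64 * real d" using d3 by simp
  have W3: "(64 * real d) ^ 3 * L ^ 3 \<le> W"
  proof -
    have a: "(64 * real d) ^ 3 \<le> (64 * real d) ^ (d + 2)" by (rule power_increasing) (use d3 d64 in auto)
    have b: "L ^ 3 \<le> L ^ (d + 2)" by (rule power_increasing) (use d3 L1 in auto)
    have "(64 * real d) ^ 3 * L ^ 3 \<le> (64 * real d) ^ (d + 2) * L ^ (d + 2)"
      by (rule mult_mono[OF a b]) (use L1 in auto)
    then have "(64 * real d) ^ 3 * L ^ 3 \<le> 1 * ((64 * real d) ^ (d + 2) * L ^ (d + 2))" by simp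
    also have "\<dots> \<le> C1 * ((64 * real d) ^ (d + 2) * L ^ (d + 2))"
      by (rule mult_right_mono[OF C1]) (use L1 in simp)
    also have "\<dots> \<le> W" using A2 unfolding W_def L_def C1_def by (simp add: mult.assoc)
    finally show ?thesis .
  qed
  have Wd: "16 * real d * (64 * real d) ^ d * L ^ (d + 2) \<le> W"
  proof -
    have a: "16 * real d \<le> (64 * real d) ^ 2" using d3 by (simp add: power2_eq_square)
    have "16 * real d * (64 * real d) ^ d * L ^ (d + 2) \<le> (64 * real d) ^ 2 * (64 * real d) ^ d * L ^ (d + 2)"
      using a L1 by (intro mult_right_mono) auto
    also have "\<dots> = 1 * ((64 * real d) ^ (d + 2) * L ^ (d + 2))"
    proof -
      have e: "(64 * real d) ^ (d + 2) = (64 * real d) ^ 2 * (64 * real d) ^ d" by (subst add.commute) (rule power_add)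
      show ?thesis unfolding e by (simp only: mult_1 mult.assoc)
    qed
    also have "\<dots> \<le> C1 * ((64 * real d) ^ (d + 2) * L ^ (d + 2))"
      by (rule mult_right_mono[OF C1]) (use L1 in simp)
    also have "\<dots> \<le> W" using A2 unfolding W_def L_def C1_def by (simp add: mult.assoc)
    finally show ?thesis .
  qed
  define Xv where "Xv = p * real n / (64 * real d * L)"
  define Yu where "Yu = p * real m / (64 * real d * L)"
  have Xv0: "0 \<le> Xv" unfolding Xv_def using p0 Lpos by simp
  have Yu0: "0 \<le> Yu" unfolding Yu_def using p0 Lpos by simp
  have Xv: "Xv \<le> gV / 4"
  proof -
    have "p * (real n / (2 * real d)) \<le> p * real NV" using NVn p0 by (intro mult_left_mono) auto
    then have "p * (real n / (2 * real d)) / (32 * L) \<le> p * real NV / (32 * L)" using Lpos by (intro divide_right_mono) auto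
    then show ?thesis unfolding Xv_def gV_def using Lpos d3 by (simp add: field_simps)
  qed
  have Yu: "Yu \<le> gU / 4"
  proof -
    have "p * M \<le> p * real NU" using NUM p0 by (intro mult_left_mono) auto
    then have "p * M / (32 * L) \<le> p * real NU / (32 * L)" using Lpos by (intro divide_right_mono) auto
    then show ?thesis unfolding Yu_def gU_def M_def using Lpos d3 by (simp add: field_simps)
  qed
  have kap: "real m / (16 * real d) \<le> min (real NU) (real NV) / 8"
    using NUM NVM unfolding M_def by (simp add: field_simps)
  have Pk: "T \<le> p * (min (real NU) (real NV) / 8) * (gV / 4)"
  proof -
    have "p * (real m / (16 * real d)) * Xv \<le> p * (min (real NU) (real NV) / 8) * (gV / 4)"
      using kap Xv p0 Xv0 d3 by (intro mult_mono) auto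
    moreover have "p * (real m / (16 * real d)) * Xv = C1 ^ 2 * (p1 ^ 2 * real n ^ 1 * real m ^ 1) / (1024 * real d ^ 2 * L)"
      unfolding Xv_def p_def using Lpos d3 by (simp add: field_simps power2_eq_square)
    moreover have "T \<le> C1 ^ 2 * (p1 ^ 2 * real n ^ 1 * real m ^ 1) / (1024 * real d ^ 2 * L)"
    proof -
      have W3': "262144 * (real d ^ 3 * L ^ 3) \<le> W" using W3 by (simp add: power_mult_distrib mult.assoc)
      have X0: "0 \<le> real d ^ 3 * L ^ 3" using Lpos by simp
      have "16384 * (real d ^ 3 * L ^ 3) \<le> W" using W3' X0 by linarith
      then have "16384 * real d ^ 3 * L ^ 3 \<le> W" by (simp add: mult.assoc)
      then have "16384 * real d ^ 3 * L ^ 3 \<le> p1 ^ 2 * real n ^ 1 * real m ^ 1" using K1 unfolding W_def by linarith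
      then have "C1 * (16384 * real d ^ 3 * L ^ 3) \<le> C1 ^ 2 * (p1 ^ 2 * real n ^ 1 * real m ^ 1)"
      proof -
        assume h: "16384 * real d ^ 3 * L ^ 3 \<le> p1 ^ 2 * real n ^ 1 * real m ^ 1"
        have "C1 * (16384 * real d ^ 3 * L ^ 3) \<le> C1 * (p1 ^ 2 * real n ^ 1 * real m ^ 1)" using h C1 by (intro mult_left_mono) auto
        also have "\<dots> \<le> C1 ^ 2 * (p1 ^ 2 * real n ^ 1 * real m ^ 1)"
          using C1 p1pos mR by (intro mult_right_mono) (auto simp: power2_eq_square)
        finally show ?thesis .
      qed
      then show ?thesis unfolding T_def using Lpos d3 by (simp add: field_simps power2_eq_square power3_eq_cube)
    qed
    ultimately show ?thesis by linarith
  qed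
  define D where "D = 64 * real d * L"
  have Dpos: "0 < D" unfolding D_def using Lpos d3 by simp
  have PA: "T \<le> p * ((gV / 4) ^ k * (gU / 4) ^ k) * (gV / 4)"
  proof -
    have mono: "p * (Xv ^ k * Yu ^ k) * Xv \<le> p * ((gV / 4) ^ k * (gU / 4) ^ k) * (gV / 4)"
      using Xv Yu Xv0 Yu0 p0 by (intro mult_mono power_mono mult_nonneg_nonneg zero_le_power) auto
    have XY: "Xv = (p * real n) / D" "Yu = (p * real m) / D" unfolding Xv_def Yu_def D_def by auto
    have "p * (Xv ^ k * Yu ^ k) * Xv = p * (p * real n) ^ (k + 1) * (p * real m) ^ k / (D ^ (k + 1) * D ^ k)"
      unfolding XY by (simp add: power_divide field_simps)
    also have "\<dots> = p ^ (2 * k + 2) * real n ^ (k + 1) * real m ^ k / D ^ d"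
    proof -
      have a: "p * (p * real n) ^ (k + 1) * (p * real m) ^ k = p ^ (2 * k + 2) * real n ^ (k + 1) * real m ^ k"
      proof -
        have "p * (p * real n) ^ (k + 1) * (p * real m) ^ k = (p * p ^ (k + 1) * p ^ k) * (real n ^ (k + 1) * real m ^ k)"
          by (simp add: power_mult_distrib mult_ac)
        also have "p * p ^ (k + 1) * p ^ k = p ^ (2 * k + 2)"
          by (simp add: power_add[symmetric] mult_2)
        finally show ?thesis by (simp add: mult_ac)
      qed
      have b: "D ^ (k + 1) * D ^ k = D ^ d" unfolding d by (simp add: power_add[symmetric] mult_2)
      show ?thesis unfolding a b ..
    qed
    also have "\<dots> = C1 ^ (2 * k + 2) * (p1 ^ (2 * k + 2) * real n ^ (k + 1) * real m ^ k) / D ^ d"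
      unfolding p_def by (simp add: power_mult_distrib mult_ac)
    finally have eqA: "p * (Xv ^ k * Yu ^ k) * Xv = C1 ^ (2 * k + 2) * (p1 ^ (2 * k + 2) * real n ^ (k + 1) * real m ^ k) / D ^ d" .
    have "C1 * W \<le> C1 ^ (2 * k + 2) * (p1 ^ (2 * k + 2) * real n ^ (k + 1) * real m ^ k)"
    proof -
      have "C1 * W \<le> C1 * (p1 ^ (2 * k + 2) * real n ^ (k + 1) * real m ^ k)" using K2 C1 unfolding W_def by (intro mult_left_mono) auto
      also have "\<dots> \<le> C1 ^ (2 * k + 2) * (p1 ^ (2 * k + 2) * real n ^ (k + 1) * real m ^ k)"
      proof (rule mult_right_mono)
        show "C1 \<le> C1 ^ (2 * k + 2)" by (rule pow_ge_self[OF C1]) simp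
      qed (use p1pos mR in simp)
      finally show ?thesis .
    qed
    then have c: "C1 * W / D ^ d \<le> p * (Xv ^ k * Yu ^ k) * Xv" unfolding eqA using Dpos by (intro divide_right_mono) auto
    have "T = C1 * (16 * real d * (64 * real d) ^ d * L ^ (d + 2)) / D ^ d"
    proof -
      have "D ^ d = (64 * real d) ^ d * L ^ d" unfolding D_def by (simp add: power_mult_distrib)
      moreover have "L ^ (d + 2) = L ^ d * L ^ 2" by (rule power_add)
      ultimately show ?thesis unfolding T_def using Lpos d3 by (simp add: field_simps)
    qed
    also have "\<dots> \<le> C1 * W / D ^ d" using Wd C1 Dpos by (intro divide_right_mono mult_left_mono) auto
    finally show ?thesis using c mono by linarith
  qed
  have Hf: "(2 * real s + 6) * ln (real n + 1) \<le> p * min ((gV / 4) ^ k * (gU / 4) ^ k) (min (real NU) (real NV) / 8) * (gV / 4)"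
  proof (cases "(gV / 4) ^ k * (gU / 4) ^ k \<le> min (real NU) (real NV) / 8")
    case True
    then show ?thesis using lhsT PA by (simp add: min_def)
  next
    case False
    then show ?thesis using lhsT Pk by (simp add: min_def)
  qed
  have m4n: "4 * k + 2 \<le> n" using m4k mn by linarith
  let ?T = "\<lambda>E. \<forall>u<m. \<forall>u'<m. u \<noteq> u' \<longrightarrow> many_disjoint_paths E (2 * k + 2) r (Inl u) (Inl u')"
  have P: "Pr ({..<m} \<times> {..<n}) p (\<lambda>E. \<not> ?T E) \<le> 1 / real n"
    by (rule prob_at_n[OF k m4n n3 mn p0 p1 Hg1[unfolded gU_def s_def NU_def L_def] Hg2[unfolded gV_def s_def NV_def L_def]
          HN1[unfolded s_def NU_def] HN2[unfolded s_def NV_def] Hf[unfolded gU_def gV_def s_def NU_def NV_def L_def]])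
  have "bip_prob m n (C1 * p1) (\<lambda>E. \<forall>u<m. \<forall>u'<m. u \<noteq> u' \<longrightarrow>
           many_disjoint_paths E (d + 1) (2 ^ (10 * d) * c0 * log 2 (real n)) (Inl u) (Inl u'))
      = Pr ({..<m} \<times> {..<n}) p ?T"
    unfolding bip_prob_Pr p_def r_def d by simp
  also have "\<dots> = 1 - Pr ({..<m} \<times> {..<n}) p (\<lambda>E. \<not> ?T E)" by (rule Pr_compl) simp
  finally have eq: "bip_prob m n (C1 * p1) (\<lambda>E. \<forall>u<m. \<forall>u'<m. u \<noteq> u' \<longrightarrow>
           many_disjoint_paths E (d + 1) (2 ^ (10 * d) * c0 * log 2 (real n)) (Inl u) (Inl u'))
      = 1 - Pr ({..<m} \<times> {..<n}) p (\<lambda>E. \<not> ?T E)" .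
  have "real n powr (-1) = 1 / real n" using n3 by (simp add: powr_minus divide_inverse)
  then show ?thesis unfolding eq using P by simp
qed

lemma powr_pow_exp: "0 < x \<Longrightarrow> (x powr c) ^ a = x powr (c * real a)"
  by (simp add: powr_def exp_of_nat_mult[symmetric] mult_ac)

lemma growth:
  fixes x b K :: real and a :: nat
  assumes x: "1 \<le> x" and b: "0 < b" and a: "1 \<le> a" and K: "0 \<le> K"
    and L: "K * (2 * real a / b) ^ a \<le> b / 2 * ln x"
  shows "K * ln x ^ a \<le> x powr b"
proof -
  define c where "c = b / (2 * real a)"
  have c: "0 < c" unfolding c_def using a b by simp
  have xp: "0 < x" using x by simp
  have L0: "0 \<le> ln x" using x by simp
  have "c * ln x = ln (x powr c)" using xp by (simp add: ln_powr)
  also have "\<dots> \<le> x powr c" using xp by (intro ln_bound) simp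
  finally have "ln x \<le> x powr c / c" using c by (simp add: field_simps)
  then have "ln x ^ a \<le> (x powr c / c) ^ a" using L0 by (intro power_mono) auto
  also have "\<dots> = x powr (c * real a) / c ^ a" using xp by (simp add: power_divide powr_pow_exp)
  also have "\<dots> = x powr (b / 2) * (2 * real a / b) ^ a"
  proof -
    have ca: "c * real a = b / 2" unfolding c_def using a by simp
    have ci: "(2 * real a / b) ^ a = 1 / c ^ a" unfolding c_def by (simp add: power_divide)
    show ?thesis unfolding ca ci by simp
  qed
  finally have h: "ln x ^ a \<le> x powr (b / 2) * (2 * real a / b) ^ a" .
  have "K * ln x ^ a \<le> K * (x powr (b / 2) * (2 * real a / b) ^ a)" using h K by (intro mult_left_mono)
  also have "\<dots> = x powr (b / 2) * (K * (2 * real a / b) ^ a)" by simp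
  also have "\<dots> \<le> x powr (b / 2) * (b / 2 * ln x)" using L by (intro mult_left_mono) auto
  also have "b / 2 * ln x \<le> x powr (b / 2)"
  proof -
    have "b / 2 * ln x = ln (x powr (b / 2))" using xp by (simp add: ln_powr)
    also have "\<dots> \<le> x powr (b / 2)" using xp by (intro ln_bound) simp
    finally show ?thesis .
  qed
  then have "x powr (b / 2) * (b / 2 * ln x) \<le> x powr (b / 2) * x powr (b / 2)" by (intro mult_left_mono) auto
  also have "\<dots> = x powr b" by (simp add: powr_add[symmetric])
  finally show ?thesis by simp
qed

lemma ev_ln_ge: "\<forall>\<^sub>F n in sequentially. T \<le> ln (real n)"
proof -
  have "filterlim (\<lambda>n. ln (real n)) at_top sequentially"
    by (rule filterlim_compose[OF ln_at_top filterlim_real_sequentially])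
  then show ?thesis by (simp add: filterlim_at_top)
qed

theorem lemma7:
  fixes d :: nat and c0 :: real and m :: "nat \<Rightarrow> nat"
  assumes "odd d" and "d \<ge> 2" and "c0 \<ge> 1"
  assumes "\<forall>\<^sub>F n in at_top.
     (let p1 = (log 2 (real (m n) * real n)) powr (1 / real d) /
               ((real (m n)) powr ((real d - 1) / (2 * real d)) *
                (real n) powr ((real d - 1) / (2 * real d)))
      in p1 * real n \<ge> p1 * real (m n) \<and> p1 * real (m n) \<ge> (log 2 (real n)) ^ 4)"
  shows "\<exists>\<epsilon>>0. \<forall>\<^sub>F n in at_top.
     (let p1 = (log 2 (real (m n) * real n)) powr (1 / real d) /
               ((real (m n)) powr ((real d - 1) / (2 * real d)) *
                (real n) powr ((real d - 1) / (2 * real d)));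
          C1 = 2 ^ (10 * d) * c0
      in bip_prob (m n) n (C1 * p1)
           (\<lambda>E. \<forall>u<m n. \<forall>u'<m n. u \<noteq> u' \<longrightarrow>
                  many_disjoint_paths E (d + 1) (2 ^ (10 * d) * c0 * log 2 (real n)) (Inl u) (Inl u'))
         \<ge> 1 - (real n) powr (- \<epsilon>))"
proof (intro exI[of _ 1] conjI)
  show "(0::real) < 1" by simp
  define k where "k = d div 2"
  have d: "d = 2 * k + 1" unfolding k_def using assms(1) by presburger
  have k: "1 \<le> k" using d assms(2) by simp
  define C1 where "C1 = 2 ^ (10 * d) * c0"
  define a where "a = d + 2"
  define b where "b = 1 / real d"
  define K where "K = C1 * (64 * real d) ^ (d + 2)"
  have b: "0 < b" unfolding b_def using d by simp
  have a: "1 \<le> a" unfolding a_def by simp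
  have K: "0 \<le> K" unfolding K_def C1_def using assms(3) by simp
  have ev2: "\<forall>\<^sub>F n in sequentially. 100 * real d ^ 2 * C1 \<le> ln (real n)" by (rule ev_ln_ge)
  have ev3: "\<forall>\<^sub>F n in sequentially. C1 * (64 * real d) ^ (d + 2) * ln (real n) ^ (d + 2) \<le> real n powr (1 / real d)"
  proof -
    have "\<forall>\<^sub>F n in sequentially. max 1 (2 / b * (K * (2 * real a / b) ^ a)) \<le> ln (real n)" by (rule ev_ln_ge)
    then show ?thesis
    proof (rule eventually_mono)
      fix n assume h: "max 1 (2 / b * (K * (2 * real a / b) ^ a)) \<le> ln (real n)"
      then have l1: "1 \<le> ln (real n)" by simp
      have n0: "0 < real n"
      proof (rule ccontr)
        assume "\<not> 0 < real n" then have "n = 0" by simp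
        then show False using l1 by simp
      qed
      have n1: "1 \<le> real n" using n0 by simp
      have "K * (2 * real a / b) ^ a \<le> b / 2 * ln (real n)" using h b by (simp add: field_simps)
      from growth[OF n1 b a K this] show "C1 * (64 * real d) ^ (d + 2) * ln (real n) ^ (d + 2) \<le> real n powr (1 / real d)"
        unfolding K_def a_def b_def .
    qed
  qed
  show "\<forall>\<^sub>F n in at_top.
     (let p1 = (log 2 (real (m n) * real n)) powr (1 / real d) /
               ((real (m n)) powr ((real d - 1) / (2 * real d)) *
                (real n) powr ((real d - 1) / (2 * real d)));
          C1 = 2 ^ (10 * d) * c0
      in bip_prob (m n) n (C1 * p1)
           (\<lambda>E. \<forall>u<m n. \<forall>u'<m n. u \<noteq> u' \<longrightarrow>
                  many_disjoint_paths E (d + 1) (2 ^ (10 * d) * c0 * log 2 (real n)) (Inl u) (Inl u'))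
         \<ge> 1 - (real n) powr (- 1))"
    using eventually_conj[OF assms(4) eventually_conj[OF ev2 ev3]]
  proof (rule eventually_mono)
    fix n assume h: "(let p1 = (log 2 (real (m n) * real n)) powr (1 / real d) /
               ((real (m n)) powr ((real d - 1) / (2 * real d)) *
                (real n) powr ((real d - 1) / (2 * real d)))
      in p1 * real n \<ge> p1 * real (m n) \<and> p1 * real (m n) \<ge> (log 2 (real n)) ^ 4) \<and>
      100 * real d ^ 2 * C1 \<le> ln (real n) \<and>
      C1 * (64 * real d) ^ (d + 2) * ln (real n) ^ (d + 2) \<le> real n powr (1 / real d)"
    show "(let p1 = (log 2 (real (m n) * real n)) powr (1 / real d) /
               ((real (m n)) powr ((real d - 1) / (2 * real d)) *
                (real n) powr ((real d - 1) / (2 * real d)));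
          C1 = 2 ^ (10 * d) * c0
      in bip_prob (m n) n (C1 * p1)
           (\<lambda>E. \<forall>u<m n. \<forall>u'<m n. u \<noteq> u' \<longrightarrow>
                  many_disjoint_paths E (d + 1) (2 ^ (10 * d) * c0 * log 2 (real n)) (Inl u) (Inl u'))
         \<ge> 1 - (real n) powr (- 1))"
      unfolding Let_def
      using numeric_main[OF k d assms(3), of "m n" n] h unfolding Let_def C1_def by blast
  qed
qed

end
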